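(* Let $K$ be a number field. Let $a_1,b_1\in\mathcal{O}_K$ with $b_1\notin\mathcal{O}_K^\times\cup\{0\}$ such that $a_1/b_1$ is a reduced fraction and $\mathfrak{g}_1:=\langle a_1,b_1\rangle$ is a non-principal inseverable ideal. Let $b_2\in\mathcal{O}_K\setminus\{0\}$ be such that $b_2$ is not an associate of $b_1$ (i.e. $b_2\mathcal{O}_K\neq b_1\mathcal{O}_K$). Then there exists $a_2\in\mathcal{O}_K$ such that $a_2/b_2=a_1/b_1$ and $a_2/b_2$ is a reduced fraction if and only if there is an inseverable ideal $\mathfrak{g}_2\neq\mathfrak{g}_1$ with \[\frac{\langle b_1\rangle}{\mathfrak{g}_1}=\frac{\langle b_2\rangle}{\mathfrak{g}_2}.\] In particular, in this case $[\mathfrak{g}_1]=[\mathfrak{g}_2]$ in the class group of $K$.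
   Context: $\langle x_1,\dots,x_n\rangle$ denotes the $\mathcal{O}_K$-ideal generated by $x_1,\dots,x_n$; $[\mathfrak{a}]$ denotes the ideal class of $\mathfrak{a}$. A fraction $a/b$ ($b\ne0$) is reduced if no non-unit of $\mathcal{O}_K$ divides both $a$ and $b$. A nonzero ideal of $\mathcal{O}_K$ is inseverable if the only principal ideal containing it is $\mathcal{O}_K$. *)

theory Defs
  imports "HOL-Computational_Algebra.Polynomial" Complex_Main
begin

text \<open>Number fields are modelled as subfields of the complex numbers that are
finite-dimensional over the rationals; the ring of integers is the set of
algebraic integers in K.\<close>

definition is_subfield :: "complex set \<Rightarrow> bool" where
  "is_subfield K \<longleftrightarrow> 0 \<in> K \<and> 1 \<in> K \<and>
     (\<forall>x\<in>K. \<forall>y\<in>K. x + y \<in> K \<and> x * y \<in> K) \<and>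
     (\<forall>x\<in>K. - x \<in> K \<and> inverse x \<in> K)"

definition number_field :: "complex set \<Rightarrow> bool" where
  "number_field K \<longleftrightarrow> is_subfield K \<and>
     (\<exists>B. finite B \<and> B \<subseteq> K \<and>
        K \<subseteq> {\<Sum>b\<in>B. c b * b | c. \<forall>b. c b \<in> \<rat>})"

definition OK :: "complex set \<Rightarrow> complex set" where
  "OK K = {x \<in> K. algebraic_int x}"

definition OK_unit :: "complex set \<Rightarrow> complex \<Rightarrow> bool" where
  "OK_unit K x \<longleftrightarrow> x \<in> OK K \<and> (\<exists>y\<in>OK K. x * y = 1)"

definition OK_dvd :: "complex set \<Rightarrow> complex \<Rightarrow> complex \<Rightarrow> bool" where
  "OK_dvd K d a \<longleftrightarrow> d \<in> OK K \<and> (\<exists>c\<in>OK K. a = d * c)"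

definition reduced_frac :: "complex set \<Rightarrow> complex \<Rightarrow> complex \<Rightarrow> bool" where
  "reduced_frac K a b \<longleftrightarrow> b \<noteq> 0 \<and>
     (\<forall>d\<in>OK K. OK_dvd K d a \<and> OK_dvd K d b \<longrightarrow> OK_unit K d)"

definition is_ideal :: "complex set \<Rightarrow> complex set \<Rightarrow> bool" where
  "is_ideal K I \<longleftrightarrow> I \<subseteq> OK K \<and> 0 \<in> I \<and>
     (\<forall>x\<in>I. \<forall>y\<in>I. x + y \<in> I) \<and> (\<forall>r\<in>OK K. \<forall>x\<in>I. r * x \<in> I)"

definition gen_ideal :: "complex set \<Rightarrow> complex set \<Rightarrow> complex set" where
  "gen_ideal K S = \<Inter> {I. is_ideal K I \<and> S \<subseteq> I}"

definition principal_ideal :: "complex set \<Rightarrow> complex set \<Rightarrow> bool" where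
  "principal_ideal K I \<longleftrightarrow> (\<exists>x\<in>OK K. I = gen_ideal K {x})"

definition inseverable :: "complex set \<Rightarrow> complex set \<Rightarrow> bool" where
  "inseverable K I \<longleftrightarrow> is_ideal K I \<and> I \<noteq> {0} \<and>
     (\<forall>J. is_ideal K J \<and> principal_ideal K J \<and> I \<subseteq> J \<longrightarrow> J = OK K)"

text \<open>The fractional ideal <b>/I = b * I^{-1}, with I^{-1} = {x in K. x I \<subseteq> O_K}.\<close>
definition frac_div :: "complex set \<Rightarrow> complex \<Rightarrow> complex set \<Rightarrow> complex set" where
  "frac_div K b I = (\<lambda>x. b * x) ` {x \<in> K. \<forall>y\<in>I. x * y \<in> OK K}"

definition same_class :: "complex set \<Rightarrow> complex set \<Rightarrow> complex set \<Rightarrow> bool" where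
  "same_class K I J \<longleftrightarrow> (\<exists>\<alpha>\<in>OK K. \<exists>\<beta>\<in>OK K. \<alpha> \<noteq> 0 \<and> \<beta> \<noteq> 0 \<and>
     (\<lambda>x. \<alpha> * x) ` I = (\<lambda>x. \<beta> * x) ` J)"

end

theory Submission
  imports Defs "Jordan_Normal_Form.Schur_Decomposition"
begin


definition zspan :: "complex set \<Rightarrow> complex set" where
  "zspan S = {\<Sum>t\<in>S. of_int (c t) * t | c. True}"

lemma alg_int_stable:
  fixes S :: "complex set" and z :: complex
  assumes fin: "finite S" and nz: "s0 \<in> S" "s0 \<noteq> 0"
    and st: "\<And>s. s \<in> S \<Longrightarrow> z * s \<in> zspan S"
  shows "algebraic_int z"
proof -
  obtain ss where ss: "set ss = S" "distinct ss" using finite_distinct_list[OF fin] by blast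
  define n where "n = length ss"
  have "\<forall>s\<in>S. \<exists>c. z * s = (\<Sum>t\<in>S. of_int (c t) * t)" using st unfolding zspan_def by blast
  then obtain C where C: "\<And>s. s \<in> S \<Longrightarrow> z * s = (\<Sum>t\<in>S. of_int (C s t) * t)" by metis
  define A :: "int mat" where "A = mat n n (\<lambda>(i,j). C (ss!i) (ss!j))"
  define v :: "complex vec" where "v = vec n (\<lambda>i. ss!i)"
  have A: "A \<in> carrier_mat n n" unfolding A_def by auto
  have sumS: "(\<Sum>t\<in>S. f t) = (\<Sum>j<n. f (ss!j))" for f :: "complex \<Rightarrow> complex"
  proof -
    have "(\<Sum>t\<in>S. f t) = sum_list (map f ss)" using ss by (simp add: sum_list_distinct_conv_sum_set)
    also have "\<dots> = (\<Sum>j<n. f (ss!j))" unfolding n_def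
      by (simp add: sum_list_sum_nth atLeast0LessThan)
    finally show ?thesis .
  qed
  have ev: "(of_int_hom.mat_hom A) *\<^sub>v v = z \<cdot>\<^sub>v v"
  proof (rule eq_vecI)
    fix i assume i: "i < dim_vec (z \<cdot>\<^sub>v v)"
    hence i: "i < n" by (simp add: v_def)
    have si: "ss!i \<in> S" using i ss unfolding n_def by auto
    have "(of_int_hom.mat_hom A *\<^sub>v v) $ i = (\<Sum>j<n. of_int (C (ss!i) (ss!j)) * ss!j)"
      using i by (simp add: A_def v_def mult_mat_vec_def scalar_prod_def atLeast0LessThan)
    also have "\<dots> = z * ss!i" using C[OF si] sumS by simp
    finally show "(of_int_hom.mat_hom A *\<^sub>v v) $ i = (z \<cdot>\<^sub>v v) $ i" using i by (simp add: v_def)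
  qed (simp add: v_def A_def)
  have vnz: "v \<noteq> 0\<^sub>v n"
  proof
    assume "v = 0\<^sub>v n"
    obtain j where "j < n" "ss!j = s0" using nz ss unfolding n_def by (metis in_set_conv_nth)
    with \<open>v = 0\<^sub>v n\<close> nz show False unfolding v_def by (metis index_vec index_zero_vec(1))
  qed
  have Ac: "of_int_hom.mat_hom A \<in> carrier_mat n n" using A by auto
  have "eigenvector (of_int_hom.mat_hom A) v z"
    unfolding eigenvector_def using ev vnz Ac by (auto simp: v_def)
  hence "eigenvalue (of_int_hom.mat_hom A) z" unfolding eigenvalue_def by blast
  hence "poly (char_poly (of_int_hom.mat_hom A)) z = 0" using eigenvalue_root_char_poly[OF Ac, of z] by blast
  hence "poly (map_poly of_int (char_poly A)) z = 0" using of_int_hom.char_poly_hom[OF A] by metis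
  moreover have "lead_coeff (char_poly A) = 1" using degree_monic_char_poly[OF A] by simp
  ultimately show ?thesis unfolding algebraic_int_altdef_ipoly by blast
qed

lemma zspanI: "x = (\<Sum>t\<in>S. of_int (c t) * t) \<Longrightarrow> x \<in> zspan S"
  unfolding zspan_def by auto

lemma zspan_0[simp]: "0 \<in> zspan S"
proof -
  have "0 = (\<Sum>t\<in>S. of_int ((\<lambda>_. 0::int) t) * t)" by simp
  thus ?thesis by (rule zspanI)
qed

lemma zspan_add: "a \<in> zspan S \<Longrightarrow> b \<in> zspan S \<Longrightarrow> a + b \<in> zspan S"
  unfolding zspan_def
proof (clarify)
  fix c d
  show "\<exists>e. (\<Sum>t\<in>S. of_int (c t) * t) + (\<Sum>t\<in>S. of_int (d t) * t) = (\<Sum>t\<in>S. of_int (e t) * t) \<and> True"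
    by (rule exI[of _ "\<lambda>t. c t + d t"]) (simp add: sum.distrib distrib_right)
qed

lemma zspan_smult: "a \<in> zspan S \<Longrightarrow> of_int k * a \<in> zspan S"
  unfolding zspan_def
proof (clarify)
  fix c
  show "\<exists>e. of_int k * (\<Sum>t\<in>S. of_int (c t) * t) = (\<Sum>t\<in>S. of_int (e t) * t) \<and> True"
    by (rule exI[of _ "\<lambda>t. k * c t"]) (simp add: sum_distrib_left mult.assoc)
qed

lemma zspan_base: assumes "finite S" "s \<in> S" shows "s \<in> zspan S"
proof -
  have "(\<Sum>t\<in>S. of_int (if t = s then 1 else 0) * t) = s"
  proof -
    have "(\<Sum>t\<in>S. of_int (if t = s then 1 else 0) * t) = (\<Sum>t\<in>S. if t = s then s else 0)"
      by (rule sum.cong) auto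
    also have "\<dots> = s" using assms by simp
    finally show ?thesis .
  qed
  thus ?thesis by (intro zspanI[where c="\<lambda>t. if t = s then 1 else 0"]) (rule sym)
qed

lemma zspan_sum: "finite I \<Longrightarrow> (\<And>i. i \<in> I \<Longrightarrow> f i \<in> zspan S) \<Longrightarrow> sum f I \<in> zspan S"
  by (induction I rule: finite_induct) (auto intro: zspan_add)

lemma zspan_rec:
  fixes f :: "nat \<Rightarrow> complex" and p :: "int poly"
  assumes base: "\<And>i. i < m \<Longrightarrow> f i \<in> zspan S"
    and rec: "\<And>i. i \<ge> m \<Longrightarrow> f i = (\<Sum>k<m. of_int (- coeff p k) * f (i - m + k))"
    and m: "m > 0"
  shows "f i \<in> zspan S"
proof (induction i rule: less_induct)
  case (less i)
  show ?case
  proof (cases "i < m")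
    case True thus ?thesis by (rule base)
  next
    case False
    hence "f i = (\<Sum>k<m. of_int (- coeff p k) * f (i - m + k))" by (intro rec) simp
    also have "\<dots> \<in> zspan S"
    proof (rule zspan_sum)
      fix k assume k: "k \<in> {..<m}"
      have "f (i - m + k) \<in> zspan S" using False k by (intro less.IH) auto
      thus "of_int (- coeff p k) * f (i - m + k) \<in> zspan S" by (rule zspan_smult)
    qed simp
    finally show ?thesis .
  qed
qed

lemma monic_pow_rec:
  fixes x :: complex and p :: "int poly"
  assumes "poly (map_poly of_int p) x = 0" "lead_coeff p = 1" "degree p = m" "i \<ge> m"
  shows "x ^ i = (\<Sum>k<m. of_int (- coeff p k) * x ^ (i - m + k))"
proof -
  have "0 = poly (map_poly of_int p) x" using assms by simp
  also have "\<dots> = (\<Sum>k\<le>m. of_int (coeff p k) * x ^ k)"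
    using assms by (simp add: poly_altdef degree_map_poly coeff_map_poly)
  also have "\<dots> = (\<Sum>k<m. of_int (coeff p k) * x ^ k) + x ^ m"
    using assms by (simp add: lessThan_Suc_atMost[symmetric])
  finally have xm: "x ^ m = (\<Sum>k<m. of_int (- coeff p k) * x ^ k)"
    by (simp add: sum_negf eq_neg_iff_add_eq_0 add.commute)
  have "x ^ i = x ^ (i - m) * x ^ m" using assms(4) by (simp flip: power_add)
  also have "\<dots> = (\<Sum>k<m. of_int (- coeff p k) * x ^ (i - m + k))"
    unfolding xm sum_distrib_left by (intro sum.cong) (auto simp: power_add)
  finally show ?thesis .
qed

lemma alg_int_monic:
  fixes x :: complex
  assumes "algebraic_int x"
  obtains p :: "int poly" where "poly (map_poly of_int p) x = 0" "lead_coeff p = 1" "degree p > 0"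
proof -
  obtain p :: "int poly" where p: "poly (map_poly of_int p) x = 0" "lead_coeff p = 1"
    using assms unfolding algebraic_int_altdef_ipoly by blast
  have "degree p > 0"
  proof (rule ccontr)
    assume "\<not> degree p > 0"
    hence "p = [:1:]" using p(2) by (metis coeff_pCons_0 degree_eq_zeroE gr0I)
    thus False using p(1) by simp
  qed
  thus ?thesis using that p by blast
qed

lemma alg_int_add_mult:
  fixes x y :: complex
  assumes x: "algebraic_int x" and y: "algebraic_int y"
  shows "algebraic_int (x + y) \<and> algebraic_int (x * y)"
proof -
  obtain p :: "int poly" where p: "poly (map_poly of_int p) x = 0" "lead_coeff p = 1" "degree p > 0"
    using alg_int_monic[OF x] by blast
  obtain q :: "int poly" where q: "poly (map_poly of_int q) y = 0" "lead_coeff q = 1" "degree q > 0"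
    using alg_int_monic[OF y] by blast
  define m where "m = degree p"
  define n where "n = degree q"
  define S where "S = (\<lambda>(i,j). x ^ i * y ^ j) ` ({..<m} \<times> {..<n})"
  have finS: "finite S" unfolding S_def by auto
  have inS: "x ^ i * y ^ j \<in> S" if "i < m" "j < n" for i j
    unfolding S_def using that by force
  have allj: "x ^ i * y ^ j \<in> zspan S" if "j < n" for i j
  proof (rule zspan_rec[where m=m and p=p and f="\<lambda>i. x ^ i * y ^ j"])
    fix i' assume "i' < m" thus "x ^ i' * y ^ j \<in> zspan S" using that finS inS zspan_base by blast
  next
    fix i' assume "i' \<ge> m"
    thus "x ^ i' * y ^ j = (\<Sum>k<m. of_int (- coeff p k) * (x ^ (i' - m + k) * y ^ j))"
      using monic_pow_rec[OF p(1,2) m_def[symmetric]] by (simp add: sum_distrib_right mult.assoc)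
  qed (use p m_def in auto)
  have all: "x ^ i * y ^ j \<in> zspan S" for i j
  proof (rule zspan_rec[of n _ _ q, where f = "\<lambda>j. x ^ i * y ^ j"])
    fix j' assume "j' < n" thus "x ^ i * y ^ j' \<in> zspan S" by (rule allj)
  next
    fix j' assume "j' \<ge> n"
    thus "x ^ i * y ^ j' = (\<Sum>k<n. of_int (- coeff q k) * (x ^ i * y ^ (j' - n + k)))"
      using monic_pow_rec[OF q(1,2) n_def[symmetric]] by (simp add: sum_distrib_left mult_ac)
  qed (use q n_def in auto)
  have one: "1 \<in> S" using inS[of 0 0] p q m_def n_def by simp
  have "algebraic_int (x + y)"
  proof (rule alg_int_stable[OF finS one])
    fix s assume "s \<in> S"
    then obtain i j where s: "s = x ^ i * y ^ j" unfolding S_def by auto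
    have e: "(x + y) * s = x ^ Suc i * y ^ j + x ^ i * y ^ Suc j" by (simp add: s algebra_simps)
    show "(x + y) * s \<in> zspan S" unfolding e by (rule zspan_add[OF all all])
  qed simp
  moreover have "algebraic_int (x * y)"
  proof (rule alg_int_stable[OF finS one])
    fix s assume "s \<in> S"
    then obtain i j where s: "s = x ^ i * y ^ j" unfolding S_def by auto
    have e: "(x * y) * s = x ^ Suc i * y ^ Suc j" by (simp add: s algebra_simps)
    show "(x * y) * s \<in> zspan S" unfolding e by (rule all)
  qed simp
  ultimately show ?thesis by blast
qed


lemma rat_denom: assumes "(q::complex) \<in> \<rat>" obtains n :: int where "n > 0" "of_int n * q \<in> \<int>"
proof -
  obtain a b where "b > 0" "q = of_int a / of_int b" using Rats_cases'[OF assms] by metis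
  hence "of_int b * q = of_int a" by simp
  thus ?thesis using that \<open>b > 0\<close> by (metis Ints_of_int)
qed

lemma common_denom:
  assumes "finite I" "\<And>i. i \<in> I \<Longrightarrow> (q i::complex) \<in> \<rat>"
  obtains n :: int where "n > 0" "\<And>i. i \<in> I \<Longrightarrow> of_int n * q i \<in> \<int>"
proof -
  have "\<exists>n::int. n > 0 \<and> (\<forall>i\<in>I. of_int n * q i \<in> \<int>)" using assms
  proof (induction I rule: finite_induct)
    case empty show ?case by (intro exI[of _ 1]) auto
  next
    case (insert a I)
    then obtain n :: int where n: "n > 0" "\<forall>i\<in>I. of_int n * q i \<in> \<int>" by auto
    obtain m :: int where m: "m > 0" "of_int m * q a \<in> \<int>" using rat_denom insert by auto
    have "of_int (n * m) * q i \<in> \<int>" if "i \<in> insert a I" for i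
    proof (cases "i = a")
      case True
      have e: "of_int (n * m) * q i = of_int n * (of_int m * q a)" using True by simp
      show ?thesis unfolding e by (metis Ints_mult Ints_of_int m(2))
    next
      case False
      hence "i \<in> I" using that by auto
      have e: "of_int (n * m) * q i = of_int m * (of_int n * q i)" by simp
      show ?thesis unfolding e by (metis Ints_mult Ints_of_int n(2) \<open>i \<in> I\<close>)
    qed
    thus ?case using n m by (intro exI[of _ "n * m"]) auto
  qed
  thus ?thesis using that by blast
qed

definition qspan :: "complex set \<Rightarrow> complex set" where
  "qspan S = {\<Sum>t\<in>S. c t * t | c. \<forall>t. c t \<in> \<rat>}"

lemma qspanI: "x = (\<Sum>t\<in>S. c t * t) \<Longrightarrow> (\<And>t. c t \<in> \<rat>) \<Longrightarrow> x \<in> qspan S"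
  unfolding qspan_def by auto

lemma qspanE: "x \<in> qspan S \<Longrightarrow> (\<And>c. x = (\<Sum>t\<in>S. c t * t) \<Longrightarrow> (\<And>t. c t \<in> \<rat>) \<Longrightarrow> P) \<Longrightarrow> P"
  unfolding qspan_def by blast

lemma qspan_0[simp]: "0 \<in> qspan S"
  by (rule qspanI[where c = "\<lambda>_. 0"]) auto

lemma qspan_add: "a \<in> qspan S \<Longrightarrow> b \<in> qspan S \<Longrightarrow> a + b \<in> qspan S"
  by (elim qspanE, rule qspanI[where c = "\<lambda>t. _ t + _ t"]) (auto simp: sum.distrib distrib_right)

lemma qspan_smult: "a \<in> qspan S \<Longrightarrow> k \<in> \<rat> \<Longrightarrow> k * a \<in> qspan S"
  by (elim qspanE, rule qspanI[where c = "\<lambda>t. k * _ t"]) (auto simp: sum_distrib_left mult.assoc)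

lemma qspan_base: assumes "finite S" "s \<in> S" shows "s \<in> qspan S"
proof (rule qspanI[where c = "\<lambda>t. if t = s then 1 else 0"])
  have "(\<Sum>t\<in>S. (if t = s then 1 else 0) * t) = (\<Sum>t\<in>S. if t = s then s else 0)"
    by (rule sum.cong) auto
  also have "\<dots> = s" using assms by simp
  finally show "s = (\<Sum>t\<in>S. (if t = s then 1 else 0) * t)" by simp
qed auto

lemma qspan_sum: "finite I \<Longrightarrow> (\<And>i. i \<in> I \<Longrightarrow> f i \<in> qspan S) \<Longrightarrow> sum f I \<in> qspan S"
  by (induction I rule: finite_induct) (auto intro: qspan_add)

lemma qspan_sub:
  assumes "\<And>b. b \<in> B \<Longrightarrow> b \<in> qspan C"
  shows "qspan B \<subseteq> qspan C"
proof
  fix x assume "x \<in> qspan B"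
  then obtain c where x: "x = (\<Sum>t\<in>B. c t * t)" "\<And>t. c t \<in> \<rat>" by (rule qspanE) auto
  show "x \<in> qspan C"
  proof (cases "finite B")
    case True
    show ?thesis unfolding x(1) by (rule qspan_sum[OF True]) (use assms x(2) qspan_smult in auto)
  next
    case False thus ?thesis using x by simp
  qed
qed

definition basis_of :: "complex set \<Rightarrow> complex list \<Rightarrow> bool" where
  "basis_of K w \<longleftrightarrow> (\<forall>j<length w. w!j \<in> OK K) \<and>
     (\<forall>x\<in>K. \<exists>c. (\<forall>j. c j \<in> \<rat>) \<and> x = (\<Sum>j<length w. c j * w!j)) \<and>
     (\<forall>c. (\<forall>j<length w. c j \<in> \<rat>) \<longrightarrow> (\<Sum>j<length w. c j * w!j) = 0 \<longrightarrow> (\<forall>j<length w. c j = 0))"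

locale nf =
  fixes K :: "complex set"
  assumes nfK: "number_field K"
begin

lemma sf: "is_subfield K" using nfK unfolding number_field_def by auto

lemma K0[simp,intro]: "0 \<in> K" and K1[simp,intro]: "1 \<in> K"
  using sf unfolding is_subfield_def by auto

lemma Kadd[intro]: "x \<in> K \<Longrightarrow> y \<in> K \<Longrightarrow> x + y \<in> K"
  and Kmult[intro]: "x \<in> K \<Longrightarrow> y \<in> K \<Longrightarrow> x * y \<in> K"
  and Kuminus[intro]: "x \<in> K \<Longrightarrow> - x \<in> K"
  and Kinverse[intro]: "x \<in> K \<Longrightarrow> inverse x \<in> K"
  using sf unfolding is_subfield_def by auto

lemma Kdiff[intro]: "x \<in> K \<Longrightarrow> y \<in> K \<Longrightarrow> x - y \<in> K"
  using Kadd[of x "-y"] Kuminus by auto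

lemma Kdivide[intro]: "x \<in> K \<Longrightarrow> y \<in> K \<Longrightarrow> x / y \<in> K"
  using Kmult[of x "inverse y"] Kinverse by (auto simp: divide_inverse)

lemma Kof_nat[intro]: "of_nat n \<in> K"
  by (induction n) (auto simp: Kadd)

lemma Kof_int[intro]: "of_int n \<in> K"
  by (cases n rule: int_cases) (auto intro!: Kuminus)

lemma KRats[intro]: "q \<in> \<rat> \<Longrightarrow> q \<in> K"
  by (erule Rats_cases', auto)

lemma Ksum[intro]: "(\<And>i. i \<in> I \<Longrightarrow> f i \<in> K) \<Longrightarrow> sum f I \<in> K"
  by (induction I rule: infinite_finite_induct) auto

lemma OKI: "x \<in> K \<Longrightarrow> algebraic_int x \<Longrightarrow> x \<in> OK K" by (simp add: OK_def)
lemma OK_K[dest]: "x \<in> OK K \<Longrightarrow> x \<in> K" by (simp add: OK_def)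
lemma OK_alg[dest]: "x \<in> OK K \<Longrightarrow> algebraic_int x" by (simp add: OK_def)

lemma OK0[simp,intro]: "0 \<in> OK K" and OK1[simp,intro]: "1 \<in> OK K"
  by (auto simp: OK_def)

lemma OKadd[intro]: "x \<in> OK K \<Longrightarrow> y \<in> OK K \<Longrightarrow> x + y \<in> OK K"
  and OKmult[intro]: "x \<in> OK K \<Longrightarrow> y \<in> OK K \<Longrightarrow> x * y \<in> OK K"
  using alg_int_add_mult by (auto simp: OK_def)

lemma OKuminus[intro]: "x \<in> OK K \<Longrightarrow> - x \<in> OK K"
  by (auto simp: OK_def)

lemma OKdiff[intro]: "x \<in> OK K \<Longrightarrow> y \<in> OK K \<Longrightarrow> x - y \<in> OK K"
  using OKadd[of x "-y"] OKuminus by auto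

lemma OKof_int[intro]: "of_int n \<in> OK K"
  by (auto simp: OK_def)

lemma OKsum[intro]: "(\<And>i. i \<in> I \<Longrightarrow> f i \<in> OK K) \<Longrightarrow> sum f I \<in> OK K"
  by (induction I rule: infinite_finite_induct) auto

lemma OKpow[intro]: "x \<in> OK K \<Longrightarrow> x ^ n \<in> OK K"
  by (induction n) auto

lemma OK_Ints_Rats: "x \<in> OK K \<Longrightarrow> x \<in> \<rat> \<Longrightarrow> x \<in> \<int>"
  using rational_algebraic_int_is_int by auto

lemma Bex: obtains B where "finite B" "B \<subseteq> K" "K \<subseteq> qspan B"
  using nfK unfolding number_field_def qspan_def by blast

lemma denom_exists:
  assumes x: "x \<in> K"
  obtains n :: int where "n > 0" "of_int n * x \<in> OK K"
proof -
  obtain B where B: "finite B" "B \<subseteq> K" "K \<subseteq> qspan B" by (rule Bex)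
  have "\<forall>b\<in>B. \<exists>c. x * b = (\<Sum>t\<in>B. c t * t) \<and> (\<forall>t. c t \<in> \<rat>)"
    using B x unfolding qspan_def by blast
  then obtain C where C: "\<And>b. b \<in> B \<Longrightarrow> x * b = (\<Sum>t\<in>B. C b t * t)" "\<And>b t. b \<in> B \<Longrightarrow> C b t \<in> \<rat>"
    by metis
  obtain n :: int where n: "n > 0" "\<And>bt. bt \<in> B \<times> B \<Longrightarrow> of_int n * (case bt of (b,t) \<Rightarrow> C b t) \<in> \<int>"
    by (rule common_denom[of "B \<times> B" "\<lambda>(b,t). C b t"]) (use B C in auto)
  have "1 \<in> qspan B" using B by auto
  then obtain c where c: "1 = (\<Sum>t\<in>B. c t * t)" by (rule qspanE)
  obtain s0 where s0: "s0 \<in> B" "s0 \<noteq> 0"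
  proof (rule ccontr)
    assume "\<not> thesis"
    hence "\<forall>t\<in>B. t = 0" using that by blast
    hence "(\<Sum>t\<in>B. c t * t) = 0" by simp
    thus False using c by simp
  qed
  have "algebraic_int (of_int n * x)"
  proof (rule alg_int_stable[OF B(1) s0])
    fix s assume s: "s \<in> B"
    have "of_int n * x * s = of_int n * (x * s)" by simp
    also have "\<dots> = (\<Sum>t\<in>B. (of_int n * C s t) * t)"
      unfolding C(1)[OF s] by (simp add: sum_distrib_left mult.assoc)
    finally have "of_int n * x * s = (\<Sum>t\<in>B. (of_int n * C s t) * t)" .
    moreover have "\<forall>t\<in>B. \<exists>k. of_int n * C s t = of_int k"
      using n(2) s by (auto elim!: Ints_cases)
    then obtain k where "\<And>t. t \<in> B \<Longrightarrow> of_int n * C s t = of_int (k t)" by metis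
    ultimately have "of_int n * x * s = (\<Sum>t\<in>B. of_int (k t) * t)" by simp
    thus "of_int n * x * s \<in> zspan B" by (rule zspanI)
  qed
  thus ?thesis using that n x by (auto intro!: OKI)
qed


lemma spanning_OK: obtains W where "finite W" "W \<subseteq> OK K" "K \<subseteq> qspan W"
proof -
  obtain B where B: "finite B" "B \<subseteq> K" "K \<subseteq> qspan B" by (rule Bex)
  have "\<forall>b\<in>B. \<exists>n::int. n > 0 \<and> of_int n * b \<in> OK K" using B denom_exists by blast
  then obtain N where N: "\<And>b. b \<in> B \<Longrightarrow> N b > (0::int) \<and> of_int (N b) * b \<in> OK K" by metis
  define W where "W = (\<lambda>b. of_int (N b) * b) ` B"
  have "qspan B \<subseteq> qspan W"
  proof (rule qspan_sub)
    fix b assume b: "b \<in> B"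
    have "of_int (N b) * b \<in> qspan W" unfolding W_def by (rule qspan_base) (use B b in auto)
    hence "(1 / of_int (N b)) * (of_int (N b) * b) \<in> qspan W" by (rule qspan_smult) auto
    thus "b \<in> qspan W" using N[OF b] by simp
  qed
  thus ?thesis using that[of W] B N unfolding W_def by auto
qed

lemma basis_exists: "\<exists>w. basis_of K w"
proof -
  define P where "P W \<longleftrightarrow> finite W \<and> W \<subseteq> OK K \<and> K \<subseteq> qspan W" for W
  have "\<exists>W. P W" using spanning_OK unfolding P_def by metis
  hence "\<exists>n. \<exists>W. P W \<and> card W = n" by blast
  define n where "n = (LEAST n. \<exists>W. P W \<and> card W = n)"
  obtain W where W: "P W" "card W = n" using LeastI_ex[OF \<open>\<exists>n. \<exists>W. P W \<and> card W = n\<close>] n_def by blast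
  have minW: "card W \<le> card V" if "P V" for V unfolding W(2) n_def by (rule Least_le) (use that in blast)
  have indep: "\<forall>t\<in>W. c t = 0" if c: "\<And>t. c t \<in> \<rat>" "(\<Sum>t\<in>W. c t * t) = 0" for c
  proof (rule ccontr)
    assume "\<not> (\<forall>t\<in>W. c t = 0)"
    then obtain k where k: "k \<in> W" "c k \<noteq> 0" by blast
    define V where "V = W - {k}"
    have finW: "finite W" using W P_def by auto
    have "0 = (\<Sum>t\<in>W. c t * t)" using c by simp
    also have "\<dots> = c k * k + (\<Sum>t\<in>V. c t * t)" unfolding V_def using finW k by (simp add: sum.remove)
    finally have e: "c k * k = - (\<Sum>t\<in>V. c t * t)" by (simp add: eq_neg_iff_add_eq_0)
    have "k = (1 / c k) * (c k * k)" using k(2) by simp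
    also have "\<dots> = (\<Sum>t\<in>V. (- c t / c k) * t)" unfolding e
      by (simp add: sum_distrib_left sum_negf)
    finally have "k = (\<Sum>t\<in>V. (- c t / c k) * t)" .
    hence kV: "k \<in> qspan V" by (rule qspanI) (use c in auto)
    have "qspan W \<subseteq> qspan V"
    proof (rule qspan_sub)
      fix b assume "b \<in> W"
      thus "b \<in> qspan V" using kV finW by (cases "b = k") (auto simp: V_def intro: qspan_base)
    qed
    hence "P V" using W unfolding P_def V_def by auto
    hence "card W \<le> card V" by (rule minW)
    moreover have "card V < card W" unfolding V_def using finW k by (meson card_Diff1_less)
    ultimately show False by simp
  qed
  have finW: "finite W" using W P_def by auto
  obtain w where w: "set w = W" "distinct w" using finite_distinct_list[OF finW] by blast
  define d where "d = length w"
  have bij: "bij_betw (nth w) {..<d} W" using w by (intro bij_betw_nth) (auto simp: d_def)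
  have reidx: "(\<Sum>t\<in>W. f t) = (\<Sum>j<d. f (w!j))" for f :: "complex \<Rightarrow> complex"
    using sum.reindex_bij_betw[OF bij, of f] by simp
  have "basis_of K w" unfolding basis_of_def d_def[symmetric]
  proof (intro conjI allI impI ballI)
    fix j assume "j < d" thus "w!j \<in> OK K" using W w unfolding P_def d_def by auto
  next
    fix x assume "x \<in> K"
    hence "x \<in> qspan W" using W P_def by auto
    then obtain c where c: "x = (\<Sum>t\<in>W. c t * t)" "\<And>t. c t \<in> \<rat>" by (rule qspanE) auto
    show "\<exists>c. (\<forall>j. c j \<in> \<rat>) \<and> x = (\<Sum>j<d. c j * w!j)"
      by (rule exI[of _ "\<lambda>j. c (w!j)"]) (use c reidx in auto)
  next
    fix c j assume c: "\<forall>j<d. c j \<in> \<rat>" "(\<Sum>j<d. c j * w!j) = 0" and j: "j < d"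
    define c' where "c' t = (if t \<in> W then c (the_inv_into {..<d} (nth w) t) else 0)" for t
    have inj: "inj_on (nth w) {..<d}" using bij bij_betw_def by blast
    have c'w: "c' (w!i) = c i" if "i < d" for i
      using that bij the_inv_into_f_f[OF inj] unfolding c'_def by (auto simp: bij_betw_def)
    have "\<forall>t. c' t \<in> \<rat>"
    proof
      fix t show "c' t \<in> \<rat>"
      proof (cases "t \<in> W")
        case True
        then obtain i where "i < d" "t = w!i" using bij by (auto simp: bij_betw_def)
        thus ?thesis using c'w c by auto
      qed (simp add: c'_def)
    qed
    moreover have "(\<Sum>t\<in>W. c' t * t) = 0" using c(2) c'w by (simp add: reidx)
    ultimately have "\<forall>t\<in>W. c' t = 0" using indep by blast
    thus "c j = 0" using c'w[OF j] j w d_def by auto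
  qed
  thus ?thesis by blast
qed

end


definition mtrace :: "'a::comm_ring_1 mat \<Rightarrow> 'a" where
  "mtrace A = (\<Sum>i<dim_row A. A $$ (i,i))"

lemma mtrace_comm:
  assumes A: "A \<in> carrier_mat n m" and B: "B \<in> carrier_mat m n"
  shows "mtrace (A * B) = mtrace (B * A)"
proof -
  have "mtrace (A * B) = (\<Sum>i<n. \<Sum>k<m. A $$ (i,k) * B $$ (k,i))"
    using A B unfolding mtrace_def
    by (intro sum.cong refl) (use A B in \<open>auto simp: scalar_prod_def atLeast0LessThan index_mult_mat carrier_matD\<close>)
  also have "\<dots> = (\<Sum>k<m. \<Sum>i<n. A $$ (i,k) * B $$ (k,i))"
    by (rule sum.swap)
  also have "\<dots> = mtrace (B * A)"
    using A B unfolding mtrace_def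
    by (intro sum.cong refl) (use A B in \<open>auto simp: scalar_prod_def atLeast0LessThan index_mult_mat carrier_matD mult.commute\<close>)
  finally show ?thesis .
qed

lemma mtrace_similar:
  assumes "similar_mat_wit A B P Q"
  shows "mtrace A = mtrace B"
proof -
  define n where "n = dim_row A"
  have c: "A \<in> carrier_mat n n" "B \<in> carrier_mat n n" "P \<in> carrier_mat n n" "Q \<in> carrier_mat n n"
    and QP: "Q * P = 1\<^sub>m n" and A: "A = P * B * Q"
    using assms[unfolded similar_mat_wit_def Let_def, folded n_def] by blast+
  have "mtrace A = mtrace (P * (B * Q))" unfolding A by (subst assoc_mult_mat[OF c(3) c(2) c(4)]) (rule refl)
  also have "\<dots> = mtrace ((B * Q) * P)" by (rule mtrace_comm[OF c(3) mult_carrier_mat[OF c(2) c(4)]])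
  also have "(B * Q) * P = B * (Q * P)" by (rule assoc_mult_mat[OF c(2) c(4) c(3)])
  also have "\<dots> = B" unfolding QP by (rule right_mult_one_mat[OF c(2)])
  finally show ?thesis .
qed

lemma alg_int_sum_list: "(\<And>x. x \<in> set xs \<Longrightarrow> algebraic_int (x::complex)) \<Longrightarrow> algebraic_int (sum_list xs)"
  by (induction xs) (auto dest: alg_int_add_mult)

locale nfb = nf +
  fixes w :: "complex list"
  assumes bas: "basis_of K w"
begin

abbreviation "d \<equiv> length w"

lemma wOK: "j < d \<Longrightarrow> w!j \<in> OK K" using bas unfolding basis_of_def by auto
lemma wK: "j < d \<Longrightarrow> w!j \<in> K" using wOK by auto

lemma span_ex: "x \<in> K \<Longrightarrow> \<exists>c. (\<forall>j. c j \<in> \<rat>) \<and> x = (\<Sum>j<d. c j * w!j)"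
  using bas unfolding basis_of_def by auto

lemma indep: "(\<And>j. j < d \<Longrightarrow> c j \<in> \<rat>) \<Longrightarrow> (\<Sum>j<d. c j * w!j) = 0 \<Longrightarrow> j < d \<Longrightarrow> c j = 0"
  using bas unfolding basis_of_def by blast

definition coord :: "complex \<Rightarrow> nat \<Rightarrow> complex" where
  "coord x = (SOME c. (\<forall>j. c j \<in> \<rat>) \<and> x = (\<Sum>j<d. c j * w!j))"

lemma coord: assumes "x \<in> K" shows "\<And>j. coord x j \<in> \<rat>" "x = (\<Sum>j<d. coord x j * w!j)"
proof -
  have ex: "\<exists>c. (\<forall>j. c j \<in> \<rat>) \<and> x = (\<Sum>j<d. c j * w!j)" by (rule span_ex[OF assms])
  have "(\<forall>j. coord x j \<in> \<rat>) \<and> x = (\<Sum>j<d. coord x j * w!j)"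
    unfolding coord_def by (rule someI_ex[OF ex])
  thus "\<And>j. coord x j \<in> \<rat>" "x = (\<Sum>j<d. coord x j * w!j)" by auto
qed

lemma comb_K: "(\<And>j. j < d \<Longrightarrow> c j \<in> \<rat>) \<Longrightarrow> (\<Sum>j<d. c j * w!j) \<in> K"
  by (intro Ksum Kmult[OF KRats wK]) auto

lemma coord_unique:
  assumes "\<And>j. j < d \<Longrightarrow> c j \<in> \<rat>" "x = (\<Sum>j<d. c j * w!j)" "j < d"
  shows "coord x j = c j"
proof -
  have xK: "x \<in> K" using assms comb_K by simp
  have "(\<Sum>j<d. (coord x j - c j) * w!j) = (\<Sum>j<d. coord x j * w!j) - (\<Sum>j<d. c j * w!j)"
    by (simp add: sum_subtractf left_diff_distrib)
  also have "\<dots> = 0" using coord(2)[OF xK] assms(2) by simp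
  finally have "coord x j - c j = 0" using assms coord(1)[OF xK]
    by (intro indep[where c = "\<lambda>j. coord x j - c j"]) auto
  thus ?thesis by simp
qed

lemma coord_lin:
  assumes fin: "finite I" and "\<And>k. k \<in> I \<Longrightarrow> y k \<in> K" "\<And>k. k \<in> I \<Longrightarrow> q k \<in> \<rat>" "j < d"
  shows "coord (\<Sum>k\<in>I. q k * y k) j = (\<Sum>k\<in>I. q k * coord (y k) j)"
proof (rule coord_unique)
  show "(\<Sum>k\<in>I. q k * y k) = (\<Sum>j<d. (\<Sum>k\<in>I. q k * coord (y k) j) * w!j)"
  proof -
    have "(\<Sum>k\<in>I. q k * y k) = (\<Sum>k\<in>I. q k * (\<Sum>j<d. coord (y k) j * w!j))"
      using coord(2) assms by (intro sum.cong) auto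
    also have "\<dots> = (\<Sum>j<d. (\<Sum>k\<in>I. q k * coord (y k) j) * w!j)"
      by (simp add: sum_distrib_left sum_distrib_right mult.assoc sum.swap[of _ I])
    finally show ?thesis .
  qed
  show "\<And>j. j < d \<Longrightarrow> (\<Sum>k\<in>I. q k * coord (y k) j) \<in> \<rat>"
    using assms coord(1) by (intro Rats_sum Rats_mult) auto
qed (use assms in auto)

lemma coord_add: "x \<in> K \<Longrightarrow> y \<in> K \<Longrightarrow> j < d \<Longrightarrow> coord (x + y) j = coord x j + coord y j"
  using coord_lin[of "{0::nat,1}" "\<lambda>k. if k = 0 then x else y" "\<lambda>_. 1" j] by simp

lemma coord_smult: "x \<in> K \<Longrightarrow> q \<in> \<rat> \<Longrightarrow> j < d \<Longrightarrow> coord (q * x) j = q * coord x j"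
  using coord_lin[of "{0::nat}" "\<lambda>_. x" "\<lambda>_. q" j] by simp

lemma coord_w: "i < d \<Longrightarrow> j < d \<Longrightarrow> coord (w!i) j = (if i = j then 1 else 0)"
proof (rule coord_unique[where c = "\<lambda>j. if i = j then 1 else 0"])
  assume i: "i < d"
  have "(\<Sum>j<d. (if i = j then 1 else 0) * w!j) = (\<Sum>j<d. if i = j then w!j else 0)"
    by (rule sum.cong) auto
  also have "\<dots> = w!i" using i by simp
  finally show "w!i = (\<Sum>j<d. (if i = j then 1 else 0) * w!j)" by simp
qed auto


lemma coord_0: "j < d \<Longrightarrow> coord 0 j = 0"
  by (rule coord_unique[where c = "\<lambda>_. 0"]) auto

definition Mx :: "complex \<Rightarrow> complex mat" where
  "Mx y = mat d d (\<lambda>(i,j). coord (y * w!i) j)"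

definition Tr :: "complex \<Rightarrow> complex" where
  "Tr y = (\<Sum>i<d. coord (y * w!i) i)"

lemma Mx_carrier: "Mx y \<in> carrier_mat d d" unfolding Mx_def by simp

lemma Tr_mtrace: "Tr y = mtrace (Mx y)"
  unfolding Tr_def mtrace_def Mx_def by simp

lemma Tr_Rats: "y \<in> K \<Longrightarrow> Tr y \<in> \<rat>"
  unfolding Tr_def by (intro Rats_sum coord(1) Kmult wK) auto

lemma Kpow[intro]: "x \<in> K \<Longrightarrow> x ^ n \<in> K"
  by (induction n) auto

lemma eig_alg:
  assumes x: "x \<in> OK K" and ev: "eigenvector (Mx x) v e"
  shows "algebraic_int e"
proof -
  have xK: "x \<in> K" using x by auto
  have v: "v \<in> carrier_vec d" "v \<noteq> 0\<^sub>v d" "Mx x *\<^sub>v v = e \<cdot>\<^sub>v v"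
    using ev unfolding eigenvector_def by (auto simp: Mx_def)
  define phi where "phi y i = (\<Sum>j<d. coord (y * w!i) j * v$j)" for y i
  have evi: "(\<Sum>l<d. coord (x * w!i) l * v$l) = e * v$i" if i: "i < d" for i
  proof -
    have "(Mx x *\<^sub>v v) $ i = (e \<cdot>\<^sub>v v) $ i" using v by simp
    thus ?thesis using i v(1) by (simp add: Mx_def scalar_prod_def atLeast0LessThan)
  qed
  have P: "phi (x ^ k) i = e ^ k * v$i" if "i < d" for k i
    using that
  proof (induction k arbitrary: i)
    case 0
    have "phi (x ^ 0) i = (\<Sum>j<d. (if i = j then v$j else 0))"
      unfolding phi_def using 0 by (intro sum.cong) (auto simp: coord_w)
    thus ?case using 0 by simp
  next
    case (Suc k)
    have xw: "x * w!i = (\<Sum>l<d. coord (x * w!i) l * w!l)" using coord(2) xK wK Suc by auto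
    have "x ^ Suc k * w!i = x ^ k * (x * w!i)" by simp
    also have "\<dots> = (\<Sum>l<d. coord (x * w!i) l * (x ^ k * w!l))"
      by (subst xw) (simp add: sum_distrib_left mult_ac)
    finally have e1: "x ^ Suc k * w!i = (\<Sum>l<d. coord (x * w!i) l * (x ^ k * w!l))" .
    have "phi (x ^ Suc k) i = (\<Sum>j<d. (\<Sum>l<d. coord (x * w!i) l * coord (x ^ k * w!l) j) * v$j)"
      unfolding phi_def e1 using xK wK coord(1) Suc.prems
      by (intro sum.cong refl arg_cong2[where f = "(*)"] coord_lin) (auto intro!: Kmult)
    also have "\<dots> = (\<Sum>j<d. \<Sum>l<d. coord (x * w!i) l * (coord (x ^ k * w!l) j * v$j))"
      by (simp add: sum_distrib_right mult.assoc)
    also have "\<dots> = (\<Sum>l<d. \<Sum>j<d. coord (x * w!i) l * (coord (x ^ k * w!l) j * v$j))"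
      by (rule sum.swap)
    also have "\<dots> = (\<Sum>l<d. coord (x * w!i) l * phi (x ^ k) l)"
      unfolding phi_def by (simp add: sum_distrib_left)
    also have "\<dots> = (\<Sum>l<d. coord (x * w!i) l * (e ^ k * v$l))"
      using Suc.IH by (intro sum.cong) auto
    also have "\<dots> = e ^ k * (\<Sum>l<d. coord (x * w!i) l * v$l)"
      by (simp add: sum_distrib_left mult_ac)
    also have "\<dots> = e ^ Suc k * v$i" using evi[OF Suc.prems] by simp
    finally show ?case .
  qed
  obtain p :: "int poly" where p: "poly (map_poly of_int p) x = 0" "lead_coeff p = 1"
    using x unfolding OK_def algebraic_int_altdef_ipoly by blast
  define m where "m = degree p"
  have px: "(\<Sum>k\<le>m. of_int (coeff p k) * x ^ k) = 0"
    using p(1) by (simp add: poly_altdef degree_map_poly coeff_map_poly m_def)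
  have pe: "poly (map_poly of_int p) e * v$i = 0" if i: "i < d" for i
  proof -
    have "0 = phi 0 i" unfolding phi_def using coord_0 by simp
    also have "\<dots> = phi (\<Sum>k\<le>m. of_int (coeff p k) * x ^ k) i" using px by simp
    also have "\<dots> = (\<Sum>j<d. coord (\<Sum>k\<le>m. of_int (coeff p k) * (x ^ k * w!i)) j * v$j)"
      unfolding phi_def by (simp add: sum_distrib_right mult.assoc)
    also have "\<dots> = (\<Sum>j<d. (\<Sum>k\<le>m. of_int (coeff p k) * coord (x ^ k * w!i) j) * v$j)"
      using xK wK i by (intro sum.cong refl arg_cong2[where f = "(*)"] coord_lin) (auto intro!: Kmult)
    also have "\<dots> = (\<Sum>j<d. \<Sum>k\<le>m. of_int (coeff p k) * (coord (x ^ k * w!i) j * v$j))"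
      by (simp add: sum_distrib_right mult.assoc)
    also have "\<dots> = (\<Sum>k\<le>m. \<Sum>j<d. of_int (coeff p k) * (coord (x ^ k * w!i) j * v$j))"
      by (rule sum.swap)
    also have "\<dots> = (\<Sum>k\<le>m. of_int (coeff p k) * phi (x ^ k) i)"
      unfolding phi_def by (simp add: sum_distrib_left)
    also have "\<dots> = (\<Sum>k\<le>m. of_int (coeff p k) * e ^ k) * v$i"
      using P[OF i] by (simp add: sum_distrib_right sum_distrib_left mult_ac)
    also have "\<dots> = poly (map_poly of_int p) e * v$i"
      by (simp add: poly_altdef degree_map_poly coeff_map_poly m_def)
    finally show ?thesis by simp
  qed
  obtain i where i: "i < d" "v$i \<noteq> 0" using v(1,2) by (metis eq_vecI carrier_vecD index_zero_vec(1,2))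
  have "poly (map_poly of_int p) e = 0" using pe[OF i(1)] i(2) by simp
  thus ?thesis using p(2) unfolding algebraic_int_altdef_ipoly by blast
qed

lemma Tr_int: assumes x: "x \<in> OK K" shows "Tr x \<in> \<int>"
proof -
  define A where "A = Mx x"
  have A: "A \<in> carrier_mat d d" unfolding A_def by (rule Mx_carrier)
  obtain es where es: "char_poly A = (\<Prod>a\<leftarrow>es. [:- a, 1:])" using char_poly_factorized[OF A] by blast
  obtain B P Q where sd: "schur_decomposition A es = (B, P, Q)" by (metis prod_cases3)
  from schur_decomposition[OF A es sd] have sim: "similar_mat_wit A B P Q" and dg: "diag_mat B = es" by auto
  have "mtrace A = mtrace B" by (rule mtrace_similar[OF sim])
  also have "\<dots> = sum_list es" unfolding dg[symmetric] mtrace_def diag_mat_def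
    by (simp add: sum_list_sum_nth atLeast0LessThan)
  finally have tr: "mtrace A = sum_list es" .
  have "algebraic_int e" if e: "e \<in> set es" for e
  proof -
    have "poly (char_poly A) e = 0" unfolding es using e
      by (simp add: poly_prod_list prod_list_zero_iff)
    hence "eigenvalue A e" using eigenvalue_root_char_poly[OF A, of e] by blast
    then obtain v where "eigenvector A v e" unfolding eigenvalue_def by blast
    thus ?thesis using eig_alg[OF x] unfolding A_def by blast
  qed
  hence "algebraic_int (Tr x)" using tr alg_int_sum_list unfolding Tr_mtrace A_def by metis
  moreover have "Tr x \<in> \<rat>" using Tr_Rats x by auto
  ultimately show ?thesis using rational_algebraic_int_is_int by blast
qed

end


lemma Ints_Re: "(z::complex) \<in> \<int> \<Longrightarrow> of_int \<lfloor>Re z\<rfloor> = z"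
  by (erule Ints_cases) simp

lemma det_Ints:
  fixes A :: "complex mat"
  assumes A: "A \<in> carrier_mat n n" and ent: "\<And>i j. i < n \<Longrightarrow> j < n \<Longrightarrow> A $$ (i,j) \<in> \<int>"
  shows "det A \<in> \<int>"
proof -
  define Ai where "Ai = map_mat (\<lambda>z. \<lfloor>Re z\<rfloor>) A"
  have "of_int_hom.mat_hom Ai = A"
    using A ent by (intro eq_matI) (auto simp: Ai_def Ints_Re)
  hence "det A = of_int (det Ai)" using of_int_hom.hom_det[of Ai] by metis
  thus ?thesis by simp
qed

context nfb begin

lemma Tr_lin:
  assumes "finite I" "\<And>k. k \<in> I \<Longrightarrow> y k \<in> K" "\<And>k. k \<in> I \<Longrightarrow> q k \<in> \<rat>"
  shows "Tr (\<Sum>k\<in>I. q k * y k) = (\<Sum>k\<in>I. q k * Tr (y k))"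
proof -
  have "Tr (\<Sum>k\<in>I. q k * y k) = (\<Sum>i<d. coord (\<Sum>k\<in>I. q k * (y k * w!i)) i)"
    unfolding Tr_def by (simp add: sum_distrib_right mult.assoc)
  also have "\<dots> = (\<Sum>i<d. \<Sum>k\<in>I. q k * coord (y k * w!i) i)"
    using assms wK by (intro sum.cong refl coord_lin) auto
  also have "\<dots> = (\<Sum>k\<in>I. \<Sum>i<d. q k * coord (y k * w!i) i)" by (rule sum.swap)
  also have "\<dots> = (\<Sum>k\<in>I. q k * Tr (y k))" unfolding Tr_def by (simp add: sum_distrib_left)
  finally show ?thesis .
qed

lemma d_pos: "d > 0"
proof (rule ccontr)
  assume "\<not> d > 0"
  hence "d = 0" by simp
  have "(1::complex) = (\<Sum>j<d. coord 1 j * w!j)" by (rule coord(2)) simp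
  thus False using \<open>d = 0\<close> by simp
qed

lemma Tr_1: "Tr 1 = of_nat d"
  unfolding Tr_def using coord_w by simp

lemma Tr_nondeg:
  assumes y: "y \<in> K" and t: "\<And>i. i < d \<Longrightarrow> Tr (w!i * y) = 0"
  shows "y = 0"
proof (rule ccontr)
  assume y0: "y \<noteq> 0"
  define z where "z = inverse y"
  have zK: "z \<in> K" using y unfolding z_def by auto
  have "z * y = (\<Sum>i<d. coord z i * (w!i * y))"
    by (subst coord(2)[OF zK]) (simp add: sum_distrib_right mult.assoc)
  hence "Tr (z * y) = (\<Sum>i<d. coord z i * Tr (w!i * y))"
    using zK y wK coord(1) by (simp only:) (rule Tr_lin, auto intro!: Kmult)
  also have "\<dots> = 0" using t by simp
  finally have "Tr 1 = 0" using y0 unfolding z_def by simp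
  thus False using Tr_1 d_pos by simp
qed

definition Gm :: "complex mat" where
  "Gm = mat d d (\<lambda>(i,j). Tr (w!i * w!j))"

lemma Gm_carrier: "Gm \<in> carrier_mat d d" unfolding Gm_def by simp

lemma Gm_Ints: "i < d \<Longrightarrow> j < d \<Longrightarrow> Gm $$ (i,j) \<in> \<int>"
  unfolding Gm_def using wOK by (auto intro!: Tr_int)

lemma detG_nz: "det Gm \<noteq> 0"
proof
  assume dz: "det Gm = 0"
  define Gi where "Gi = map_mat (\<lambda>z. \<lfloor>Re z\<rfloor>) Gm"
  have GGi: "of_int_hom.mat_hom Gi = Gm"
    using Gm_carrier Gm_Ints by (intro eq_matI) (auto simp: Gi_def Ints_Re)
  have "det Gm = of_int (det Gi)" using of_int_hom.hom_det[of Gi] GGi by metis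
  hence dGi: "det Gi = 0" using dz by simp
  define Gr :: "rat mat" where "Gr = of_int_hom.mat_hom Gi"
  have Gr: "Gr \<in> carrier_mat d d" using Gm_carrier by (simp add: Gr_def Gi_def)
  have "det Gr = of_int (det Gi)" unfolding Gr_def by (rule of_int_hom.hom_det)
  hence "det Gr = 0" using dGi by simp
  then obtain v where v: "v \<in> carrier_vec d" "v \<noteq> 0\<^sub>v d" "Gr *\<^sub>v v = 0\<^sub>v d"
    using det_0_iff_vec_prod_zero_field[OF Gr] by blast
  define c where "c j = (of_rat (v$j) :: complex)" for j
  define y where "y = (\<Sum>j<d. c j * w!j)"
  have yK: "y \<in> K" unfolding y_def c_def by (rule comb_K) simp
  have "Tr (w!i * y) = 0" if i: "i < d" for i
  proof -
    have "w!i * y = (\<Sum>j<d. c j * (w!i * w!j))" unfolding y_def by (simp add: sum_distrib_left mult_ac)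
    hence "Tr (w!i * y) = (\<Sum>j<d. c j * Tr (w!i * w!j))"
      using wK i by (simp only:) (rule Tr_lin, auto intro!: Kmult simp: c_def)
    also have "\<dots> = (\<Sum>j<d. of_rat (Gr $$ (i,j) * v$j))"
    proof (intro sum.cong refl)
      fix j assume j: "j \<in> {..<d}"
      have "Tr (w!i * w!j) = Gm $$ (i,j)" using i j by (simp add: Gm_def)
      also have "\<dots> = of_int (Gi $$ (i,j))" using GGi i j Gm_carrier
        by (metis carrier_matD(1,2) index_map_mat(1) lessThan_iff map_carrier_mat Gi_def)
      finally show "c j * Tr (w!i * w!j) = of_rat (Gr $$ (i,j) * v$j)"
        using i j Gm_carrier by (simp add: c_def Gr_def Gi_def of_rat_mult)
    qed
    also have "\<dots> = of_rat ((Gr *\<^sub>v v) $ i)"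
      using i v(1) Gr by (simp add: of_rat_sum scalar_prod_def atLeast0LessThan)
    also have "\<dots> = 0" using v i by simp
    finally show ?thesis .
  qed
  hence "y = 0" using Tr_nondeg yK by blast
  hence "c j = 0" if "j < d" for j using indep[of c j] that unfolding y_def c_def by auto
  hence "v = 0\<^sub>v d" using v(1) by (intro eq_vecI) (auto simp: c_def)
  thus False using v(2) by simp
qed

lemma denom_bound: obtains D :: int where "D \<noteq> 0" "\<And>x j. x \<in> OK K \<Longrightarrow> j < d \<Longrightarrow> of_int D * coord x j \<in> \<int>"
proof -
  have dI: "det Gm \<in> \<int>" using det_Ints[OF Gm_carrier Gm_Ints] by blast
  define D where "D = \<lfloor>Re (det Gm)\<rfloor>"
  have DG: "of_int D = det Gm" unfolding D_def using Ints_Re[OF dI] .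
  have "of_int D * coord x j \<in> \<int>" if x: "x \<in> OK K" and j: "j < d" for x j
  proof -
    have xK: "x \<in> K" using x by auto
    define cv where "cv = vec d (coord x)"
    have cv: "cv \<in> carrier_vec d" unfolding cv_def by simp
    have Gcv: "(Gm *\<^sub>v cv) $ i = Tr (w!i * x)" if i: "i < d" for i
    proof -
      have "w!i * x = (\<Sum>j<d. coord x j * (w!i * w!j))"
        by (subst coord(2)[OF xK]) (simp add: sum_distrib_left mult_ac)
      hence "Tr (w!i * x) = (\<Sum>j<d. coord x j * Tr (w!i * w!j))"
        using wK i coord(1)[OF xK] by (simp only:) (rule Tr_lin, auto intro!: Kmult)
      thus ?thesis using i Gm_carrier
        by (simp add: Gm_def cv_def scalar_prod_def atLeast0LessThan mult.commute)
    qed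
    have "det (replace_col Gm (Gm *\<^sub>v cv) j) = cv $ j * det Gm"
      by (rule cramer_lemma_mat[OF Gm_carrier cv j])
    moreover have "det (replace_col Gm (Gm *\<^sub>v cv) j) \<in> \<int>"
    proof (rule det_Ints)
      show "replace_col Gm (Gm *\<^sub>v cv) j \<in> carrier_mat d d"
        using Gm_carrier by (simp add: replace_col_def)
      fix a b assume a: "a < d" and b: "b < d"
      show "replace_col Gm (Gm *\<^sub>v cv) j $$ (a, b) \<in> \<int>"
      proof (cases "b = j")
        case True
        thus ?thesis using a b Gm_carrier Gcv[OF a] wOK[OF a] x
          by (simp add: replace_col_def Tr_int OKmult)
      next
        case False
        thus ?thesis using a b Gm_carrier Gm_Ints by (simp add: replace_col_def)
      qed
    qed
    ultimately show ?thesis using j DG by (simp add: cv_def mult.commute)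
  qed
  moreover have "D \<noteq> 0" using DG detG_nz by auto
  ultimately show ?thesis using that by blast
qed


lemma reps:
  assumes a: "a \<in> OK K" "a \<noteq> 0"
  obtains F n r0 where "finite F" "F \<subseteq> OK K" "n > (0::int)" "r0 \<in> OK K" "of_int n = a * r0"
    "\<And>x. x \<in> OK K \<Longrightarrow> \<exists>y\<in>F. \<exists>q. x = y + (\<Sum>j<d. of_int (q j) * (of_int n * w!j))"
proof -
  have aK: "a \<in> K" using a by auto
  obtain n :: int where n: "n > 0" "of_int n * inverse a \<in> OK K"
    using denom_exists[of "inverse a"] aK by auto
  define r0 where "r0 = of_int n * inverse a"
  have nr0: "of_int n = a * r0" using a unfolding r0_def by simp
  obtain D :: int where D: "D \<noteq> 0" "\<And>x j. x \<in> OK K \<Longrightarrow> j < d \<Longrightarrow> of_int D * coord x j \<in> \<int>"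
    by (rule denom_bound) blast
  define m where "m = \<bar>D\<bar> * n"
  have m: "m > 0" unfolding m_def using D n by simp
  define g where "g r = (\<Sum>j<d. (of_int (r j) / of_int D) * w!j)" for r :: "nat \<Rightarrow> int"
  define F where "F = g ` (PiE {..<d} (\<lambda>_. {0..<m})) \<inter> OK K"
  have finF: "finite F" unfolding F_def by (intro finite_Int disjI1 finite_imageI finite_PiE) auto
  have repx: "\<exists>y\<in>F. \<exists>q. x = y + (\<Sum>j<d. of_int (q j) * (of_int n * w!j))" if x: "x \<in> OK K" for x
  proof -
    have xK: "x \<in> K" using x by auto
    define e where "e j = \<lfloor>Re (of_int D * coord x j)\<rfloor>" for j
    have e: "of_int (e j) = of_int D * coord x j" if "j < d" for j
      unfolding e_def using Ints_Re[OF D(2)[OF x that]] .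
    define r where "r j = e j mod m" for j
    define q where "q j = (e j div m) * sgn D" for j
    have eq: "e j = r j + q j * n * D" for j
    proof -
      have h1: "m * (e j div m) + r j = e j" unfolding r_def by (rule mult_div_mod_eq)
      have h2: "sgn D * D = \<bar>D\<bar>" by (simp add: abs_sgn mult.commute)
      have "q j * n * D = (e j div m) * (sgn D * D) * n" unfolding q_def by (simp add: mult_ac)
      also have "\<dots> = m * (e j div m)" unfolding h2 m_def by (simp add: mult_ac)
      finally show ?thesis using h1 by linarith
    qed
    have cj: "coord x j * w!j = (of_int (r j) / of_int D) * w!j + of_int (q j) * (of_int n * w!j)"
      if j: "j < d" for j
    proof -
      have dz: "(of_int D :: complex) \<noteq> 0" using D(1) by simp
      have c1: "coord x j = of_int (e j) / of_int D"
        unfolding e[OF j] using dz by simp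
      have c2: "(of_int (e j) :: complex) = of_int (r j) + of_int (q j) * of_int n * of_int D"
        using arg_cong[OF eq[of j], of "of_int :: int \<Rightarrow> complex"] by simp
      have "coord x j = of_int (r j) / of_int D + of_int (q j) * of_int n"
        unfolding c1 c2 using dz by (simp add: add_divide_distrib)
      thus ?thesis by (simp add: distrib_right mult.assoc)
    qed
    define y where "y = g r"
    have x_eq: "x = y + (\<Sum>j<d. of_int (q j) * (of_int n * w!j))"
    proof -
      have "x = (\<Sum>j<d. coord x j * w!j)" by (rule coord(2)[OF xK])
      also have "\<dots> = (\<Sum>j<d. (of_int (r j) / of_int D) * w!j + of_int (q j) * (of_int n * w!j))"
        using cj by simp
      also have "\<dots> = y + (\<Sum>j<d. of_int (q j) * (of_int n * w!j))"
        unfolding y_def g_def by (simp add: sum.distrib)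
      finally show ?thesis .
    qed
    have "y = x - (\<Sum>j<d. of_int (q j) * (of_int n * w!j))" using x_eq by simp
    hence yOK: "y \<in> OK K" using x wOK by (auto intro!: OKdiff OKsum OKmult)
    have "g r = g (restrict r {..<d})" unfolding g_def by simp
    moreover have "restrict r {..<d} \<in> PiE {..<d} (\<lambda>_. {0..<m})"
      using m unfolding r_def by auto
    ultimately have "y \<in> F" unfolding F_def y_def using yOK y_def by blast
    thus ?thesis using x_eq by blast
  qed
  show ?thesis
    by (rule that[OF finF _ n(1) _ nr0 repx]) (use n(2) r0_def F_def in auto)
qed

lemma stable_int:
  assumes a: "a \<in> OK K" "a \<noteq> 0" and M: "is_ideal K M" "a \<in> M"
    and zM: "\<And>x. x \<in> M \<Longrightarrow> z * x \<in> M"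
  shows "algebraic_int z"
proof -
  obtain F n r0 where F: "finite F" "F \<subseteq> OK K" "n > (0::int)" "r0 \<in> OK K" "of_int n = a * r0"
    and rep: "\<And>x. x \<in> OK K \<Longrightarrow> \<exists>y\<in>F. \<exists>q. x = y + (\<Sum>j<d. of_int (q j) * (of_int n * w!j))"
    by (rule reps[OF a]) blast
  have Msub: "M \<subseteq> OK K" and M0: "0 \<in> M" and Madd: "\<And>x y. x \<in> M \<Longrightarrow> y \<in> M \<Longrightarrow> x + y \<in> M"
    and Mmult: "\<And>r x. r \<in> OK K \<Longrightarrow> x \<in> M \<Longrightarrow> r * x \<in> M"
    using M(1) unfolding is_ideal_def by auto
  have Msum: "finite I \<Longrightarrow> (\<And>i. i \<in> I \<Longrightarrow> f i \<in> M) \<Longrightarrow> sum f I \<in> M" for I f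
    by (induction I rule: finite_induct) (auto intro: Madd M0)
  have nw: "of_int n * w!j \<in> M" if "j < d" for j
  proof -
    have "of_int n * w!j = (r0 * w!j) * a" using F(5) by (simp add: mult_ac)
    thus ?thesis using Mmult[OF OKmult[OF F(4) wOK[OF that]] M(2)] by (simp only:)
  qed
  define S where "S = (F \<inter> M) \<union> (\<lambda>j. of_int n * w!j) ` {..<d} \<union> {a}"
  have finS: "finite S" unfolding S_def using F(1) by auto
  have aS: "a \<in> S" unfolding S_def by simp
  show ?thesis
  proof (rule alg_int_stable[OF finS aS a(2)])
    fix s assume s: "s \<in> S"
    have sM: "s \<in> M" using s nw M(2) unfolding S_def by auto
    have zs: "z * s \<in> M" by (rule zM[OF sM])
    then obtain y q where y: "y \<in> F" and zs_eq: "z * s = y + (\<Sum>j<d. of_int (q j) * (of_int n * w!j))"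
      using rep Msub by blast
    have "y = z * s + (\<Sum>j<d. of_int (- q j) * (of_int n * w!j))" using zs_eq by (simp add: sum_negf)
    also have "\<dots> \<in> M" by (intro Madd[OF zs] Msum Mmult[OF OKof_int] nw) auto
    finally have "y \<in> S" using y unfolding S_def by auto
    have "(\<Sum>j<d. of_int (q j) * (of_int n * w!j)) \<in> zspan S"
      using finS by (intro zspan_sum zspan_smult zspan_base) (auto simp: S_def)
    thus "z * s \<in> zspan S" unfolding zs_eq using zspan_add zspan_base[OF finS \<open>y \<in> S\<close>] by blast
  qed
qed

end


context nf begin

lemma idealD:
  assumes "is_ideal K I"
  shows "I \<subseteq> OK K" "0 \<in> I" "\<And>x y. x \<in> I \<Longrightarrow> y \<in> I \<Longrightarrow> x + y \<in> I"
    "\<And>r x. r \<in> OK K \<Longrightarrow> x \<in> I \<Longrightarrow> r * x \<in> I"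
  using assms unfolding is_ideal_def by auto

lemma ideal_OK: "is_ideal K I \<Longrightarrow> x \<in> I \<Longrightarrow> x \<in> OK K"
  using idealD(1) by blast

lemma ideal_mult_right: "is_ideal K I \<Longrightarrow> x \<in> I \<Longrightarrow> r \<in> OK K \<Longrightarrow> x * r \<in> I"
  using idealD(4)[of I r x] by (simp add: mult.commute)

lemma ideal_uminus: "is_ideal K I \<Longrightarrow> x \<in> I \<Longrightarrow> - x \<in> I"
  using idealD(4)[of I "-1" x] by (auto intro: OKuminus)

lemma ideal_diff: "is_ideal K I \<Longrightarrow> x \<in> I \<Longrightarrow> y \<in> I \<Longrightarrow> x - y \<in> I"
  using idealD(3)[of I x "-y"] ideal_uminus[of I y] by simp

lemma ideal_sum: "is_ideal K I \<Longrightarrow> (\<And>i. i \<in> A \<Longrightarrow> f i \<in> I) \<Longrightarrow> sum f A \<in> I"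
  by (induction A rule: infinite_finite_induct) (auto intro: idealD)

lemma ideal_one: "is_ideal K I \<Longrightarrow> 1 \<in> I \<Longrightarrow> I = OK K"
  using idealD(1)[of I] idealD(4)[of I _ 1] by auto

lemma ideal_OK_ideal: "is_ideal K (OK K)"
  unfolding is_ideal_def by auto

lemma gen_ideal_least: "is_ideal K L \<Longrightarrow> S \<subseteq> L \<Longrightarrow> gen_ideal K S \<subseteq> L"
  unfolding gen_ideal_def by blast

lemma gen_ideal_sup: "S \<subseteq> gen_ideal K S"
  unfolding gen_ideal_def by blast

lemma gen_ideal_ideal: assumes "S \<subseteq> OK K" shows "is_ideal K (gen_ideal K S)"
proof -
  let ?F = "{I. is_ideal K I \<and> S \<subseteq> I}"
  have ne: "OK K \<in> ?F" using assms ideal_OK_ideal by auto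
  have 1: "\<Inter>?F \<subseteq> OK K" using ne by blast
  have 2: "0 \<in> \<Inter>?F" using idealD(2) by blast
  have 3: "\<forall>x\<in>\<Inter>?F. \<forall>y\<in>\<Inter>?F. x + y \<in> \<Inter>?F" using idealD(3) by blast
  have 4: "\<forall>r\<in>OK K. \<forall>x\<in>\<Inter>?F. r * x \<in> \<Inter>?F" using idealD(4) by blast
  show ?thesis unfolding gen_ideal_def is_ideal_def using 1 2 3 4 by blast
qed

definition pr :: "complex \<Rightarrow> complex set" where
  "pr x = {r * x | r. r \<in> OK K}"

lemma pr_ideal: assumes "x \<in> OK K" shows "is_ideal K (pr x)"
  unfolding is_ideal_def pr_def
proof (intro conjI ballI subsetI)
  show "y \<in> OK K" if "y \<in> {r * x |r. r \<in> OK K}" for y using that assms by auto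
  show "0 \<in> {r * x |r. r \<in> OK K}" by (rule CollectI, rule exI[of _ 0]) auto
  show "y + z \<in> {r * x |r. r \<in> OK K}" if h: "y \<in> {r * x |r. r \<in> OK K}" "z \<in> {r * x |r. r \<in> OK K}" for y z
  proof -
    obtain r s where "y = r * x" "z = s * x" "r \<in> OK K" "s \<in> OK K" using h by blast
    thus ?thesis by (intro CollectI exI[of _ "r + s"]) (auto simp: distrib_right)
  qed
  show "t * y \<in> {r * x |r. r \<in> OK K}" if h: "t \<in> OK K" "y \<in> {r * x |r. r \<in> OK K}" for t y
  proof -
    obtain r where "y = r * x" "r \<in> OK K" using h by blast
    thus ?thesis using h by (intro CollectI exI[of _ "t * r"]) auto
  qed
qed

lemma pr_mem: "x \<in> OK K \<Longrightarrow> x \<in> pr x"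
  unfolding pr_def by (intro CollectI exI[of _ 1]) auto

lemma pr_memI: "r \<in> OK K \<Longrightarrow> r * x \<in> pr x"
  unfolding pr_def by auto

lemma pr_least: "is_ideal K I \<Longrightarrow> x \<in> I \<Longrightarrow> pr x \<subseteq> I"
  unfolding pr_def using idealD(4) by blast

lemma gen_single: assumes "x \<in> OK K" shows "gen_ideal K {x} = pr x"
  using gen_ideal_least[OF pr_ideal[OF assms]] pr_mem[OF assms]
    pr_least[OF gen_ideal_ideal, of "{x}" x] assms gen_ideal_sup[of "{x}"] by auto

definition two :: "complex \<Rightarrow> complex \<Rightarrow> complex set" where
  "two a b = {r * a + s * b | r s. r \<in> OK K \<and> s \<in> OK K}"

lemma two_ideal: assumes "a \<in> OK K" "b \<in> OK K" shows "is_ideal K (two a b)"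
  unfolding is_ideal_def
proof (intro conjI ballI subsetI)
  show "y \<in> OK K" if "y \<in> two a b" for y using that assms unfolding two_def by auto
  show "0 \<in> two a b" unfolding two_def by (intro CollectI exI[of _ 0]) auto
  show "y + z \<in> two a b" if h: "y \<in> two a b" "z \<in> two a b" for y z
  proof -
    obtain r s r' s' where "y = r * a + s * b" "z = r' * a + s' * b" "r \<in> OK K" "s \<in> OK K"
      "r' \<in> OK K" "s' \<in> OK K" using h unfolding two_def by blast
    thus ?thesis unfolding two_def
      by (intro CollectI exI[of _ "r + r'"] exI[of _ "s + s'"]) (auto simp: algebra_simps)
  qed
  show "t * y \<in> two a b" if h: "t \<in> OK K" "y \<in> two a b" for t y
  proof -
    obtain r s where "y = r * a + s * b" "r \<in> OK K" "s \<in> OK K" using h unfolding two_def by blast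
    thus ?thesis using h unfolding two_def
      by (intro CollectI exI[of _ "t * r"] exI[of _ "t * s"]) (auto simp: algebra_simps)
  qed
qed

lemma two_least: assumes "is_ideal K I" "a \<in> I" "b \<in> I" shows "two a b \<subseteq> I"
  unfolding two_def using assms idealD(3,4) by blast

lemma two_mem: assumes "a \<in> OK K" "b \<in> OK K" shows "a \<in> two a b" "b \<in> two a b"
  unfolding two_def by (intro CollectI exI[of _ 1] exI[of _ 0], use assms in auto)+

lemma gen_two: assumes "a \<in> OK K" "b \<in> OK K" shows "gen_ideal K {a, b} = two a b"
proof
  show "gen_ideal K {a, b} \<subseteq> two a b"
    using gen_ideal_least[OF two_ideal[OF assms]] two_mem[OF assms] by auto
  show "two a b \<subseteq> gen_ideal K {a, b}"
    using two_least[OF gen_ideal_ideal, of "{a,b}" a b] assms gen_ideal_sup[of "{a,b}"] by auto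
qed


definition prod_id :: "complex set \<Rightarrow> complex set \<Rightarrow> complex set" where
  "prod_id A B = gen_ideal K {x * y | x y. x \<in> A \<and> y \<in> B}"

definition col :: "complex set \<Rightarrow> complex \<Rightarrow> complex set" where
  "col L x = {t \<in> OK K. x * t \<in> L}"

definition plus_el :: "complex set \<Rightarrow> complex \<Rightarrow> complex set" where
  "plus_el L x = {p + r * x | p r. p \<in> L \<and> r \<in> OK K}"

definition maxi :: "complex set \<Rightarrow> bool" where
  "maxi P \<longleftrightarrow> is_ideal K P \<and> 1 \<notin> P \<and> (\<forall>J. is_ideal K J \<and> P \<subseteq> J \<longrightarrow> J = P \<or> 1 \<in> J)"

definition primei :: "complex set \<Rightarrow> bool" where
  "primei P \<longleftrightarrow> is_ideal K P \<and> 1 \<notin> P \<and> (\<forall>x\<in>OK K. \<forall>y\<in>OK K. x * y \<in> P \<longrightarrow> x \<in> P \<or> y \<in> P)"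

primrec prodl :: "complex set list \<Rightarrow> complex set" where
  "prodl [] = OK K"
| "prodl (P # Ps) = prod_id P (prodl Ps)"

lemma col_ideal: assumes L: "is_ideal K L" shows "is_ideal K (col L x)"
proof -
  have 1: "col L x \<subseteq> OK K" unfolding col_def by blast
  have 2: "0 \<in> col L x" using idealD(2)[OF L] unfolding col_def by simp
  have 3: "\<forall>y\<in>col L x. \<forall>z\<in>col L x. y + z \<in> col L x"
  proof (intro ballI)
    fix y z assume "y \<in> col L x" "z \<in> col L x"
    hence "y \<in> OK K" "z \<in> OK K" "x * y \<in> L" "x * z \<in> L" unfolding col_def by auto
    moreover have "x * (y + z) = x * y + x * z" by (simp add: distrib_left)
    ultimately show "y + z \<in> col L x" unfolding col_def using idealD(3)[OF L] by auto
  qed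
  have 4: "\<forall>r\<in>OK K. \<forall>y\<in>col L x. r * y \<in> col L x"
  proof (intro ballI)
    fix r y assume "r \<in> OK K" "y \<in> col L x"
    hence "r \<in> OK K" "y \<in> OK K" "x * y \<in> L" unfolding col_def by auto
    moreover have "x * (r * y) \<in> L" using idealD(4)[OF L, of r "x * y"] \<open>r \<in> OK K\<close> \<open>x * y \<in> L\<close>
      by (simp add: mult_ac)
    ultimately show "r * y \<in> col L x" unfolding col_def using OKmult by auto
  qed
  show ?thesis unfolding is_ideal_def using 1 2 3 4 by blast
qed

lemma prod_ideal: assumes "A \<subseteq> OK K" "B \<subseteq> OK K" shows "is_ideal K (prod_id A B)"
  unfolding prod_id_def by (rule gen_ideal_ideal) (use assms in blast)

lemma prod_mem: assumes "x \<in> A" "y \<in> B" shows "x * y \<in> prod_id A B"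
proof -
  have "x * y \<in> {x * y | x y. x \<in> A \<and> y \<in> B}" using assms by blast
  thus ?thesis unfolding prod_id_def using gen_ideal_sup by (rule subsetD[rotated])
qed

lemma prod_least: assumes "is_ideal K L" "\<And>x y. x \<in> A \<Longrightarrow> y \<in> B \<Longrightarrow> x * y \<in> L" shows "prod_id A B \<subseteq> L"
  unfolding prod_id_def
proof (rule gen_ideal_least[OF assms(1)])
  show "{x * y | x y. x \<in> A \<and> y \<in> B} \<subseteq> L" using assms(2) by blast
qed

lemma prod_sub_left: "is_ideal K A \<Longrightarrow> B \<subseteq> OK K \<Longrightarrow> prod_id A B \<subseteq> A"
  by (rule prod_least) (auto intro: ideal_mult_right)

lemma prod_sub_right: "is_ideal K B \<Longrightarrow> A \<subseteq> OK K \<Longrightarrow> prod_id A B \<subseteq> B"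
  by (rule prod_least) (auto intro: idealD(4))

lemma prod_mono: "A \<subseteq> A' \<Longrightarrow> B \<subseteq> B' \<Longrightarrow> A' \<subseteq> OK K \<Longrightarrow> B' \<subseteq> OK K \<Longrightarrow> prod_id A B \<subseteq> prod_id A' B'"
  by (rule prod_least[OF prod_ideal]) (auto intro: prod_mem)

lemma prod_mult_elem:
  assumes "is_ideal K L" "\<And>b c. b \<in> B \<Longrightarrow> c \<in> C \<Longrightarrow> x * (b * c) \<in> L" "t \<in> prod_id B C"
    "B \<subseteq> OK K" "C \<subseteq> OK K"
  shows "x * t \<in> L"
proof -
  have "prod_id B C \<subseteq> col L x"
    by (rule prod_least[OF col_ideal[OF assms(1)]]) (use assms in \<open>auto simp: col_def\<close>)
  thus ?thesis using assms(3) unfolding col_def by auto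
qed

lemma prod_OK: "A \<subseteq> OK K \<Longrightarrow> B \<subseteq> OK K \<Longrightarrow> prod_id A B \<subseteq> OK K"
  using prod_ideal idealD(1) by blast

lemma prod_lcomm:
  assumes "A \<subseteq> OK K" "B \<subseteq> OK K" "C \<subseteq> OK K"
  shows "prod_id A (prod_id B C) \<subseteq> prod_id B (prod_id A C)"
proof (rule prod_least[OF prod_ideal])
  fix x t assume x: "x \<in> A" and t: "t \<in> prod_id B C"
  show "x * t \<in> prod_id B (prod_id A C)"
  proof (rule prod_mult_elem[OF prod_ideal _ t])
    fix b c assume "b \<in> B" "c \<in> C"
    thus "x * (b * c) \<in> prod_id B (prod_id A C)"
      using prod_mem[of b B "x * c" "prod_id A C"] prod_mem[OF x, of c C] by (simp add: mult_ac)
  qed (use assms prod_OK in auto)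
qed (use assms prod_OK in auto)

lemma prod_assoc_sub:
  assumes "A \<subseteq> OK K" "B \<subseteq> OK K" "C \<subseteq> OK K"
  shows "prod_id A (prod_id B C) \<subseteq> prod_id (prod_id A B) C"
proof (rule prod_least[OF prod_ideal])
  fix x t assume x: "x \<in> A" and t: "t \<in> prod_id B C"
  show "x * t \<in> prod_id (prod_id A B) C"
  proof (rule prod_mult_elem[OF prod_ideal _ t])
    fix b c assume "b \<in> B" "c \<in> C"
    thus "x * (b * c) \<in> prod_id (prod_id A B) C"
      using prod_mem[of "x * b" "prod_id A B" c C] prod_mem[OF x, of b B] by (simp add: mult_ac)
  qed (use assms prod_OK in auto)
qed (use assms prod_OK in auto)

lemma prodl_OK: "(\<And>P. P \<in> set Ps \<Longrightarrow> P \<subseteq> OK K) \<Longrightarrow> prodl Ps \<subseteq> OK K"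
proof (induction Ps)
  case (Cons P Ps)
  have "P \<subseteq> OK K" "prodl Ps \<subseteq> OK K" using Cons by auto
  thus ?case by (simp only: prodl.simps) (rule prod_OK)
qed simp

lemma prodl_ideal: "(\<And>P. P \<in> set Ps \<Longrightarrow> P \<subseteq> OK K) \<Longrightarrow> is_ideal K (prodl Ps)"
proof (cases Ps)
  case Nil thus ?thesis using ideal_OK_ideal by simp
next
  case (Cons P Qs)
  assume h: "\<And>P. P \<in> set Ps \<Longrightarrow> P \<subseteq> OK K"
  have "P \<subseteq> OK K" "prodl Qs \<subseteq> OK K" using h Cons by (auto intro!: prodl_OK)
  thus ?thesis using Cons by (simp only: prodl.simps) (rule prod_ideal)
qed

lemma prodl_remove:
  assumes "M \<in> set Ps" "\<And>P. P \<in> set Ps \<Longrightarrow> P \<subseteq> OK K"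
  shows "prod_id M (prodl (remove1 M Ps)) \<subseteq> prodl Ps"
  using assms
proof (induction Ps)
  case (Cons P Ps)
  show ?case
  proof (cases "P = M")
    case True thus ?thesis by simp
  next
    case False
    hence M: "M \<in> set Ps" using Cons by auto
    have ok: "\<And>Q. Q \<in> set Ps \<Longrightarrow> Q \<subseteq> OK K" "P \<subseteq> OK K" "M \<subseteq> OK K" using Cons by auto
    have okr: "prodl (remove1 M Ps) \<subseteq> OK K"
      using ok by (intro prodl_OK) (meson notin_set_remove1)
    have "prod_id M (prodl (remove1 M (P # Ps))) = prod_id M (prod_id P (prodl (remove1 M Ps)))"
      using False by simp
    also have "\<dots> \<subseteq> prod_id P (prod_id M (prodl (remove1 M Ps)))"
      by (rule prod_lcomm) (use ok okr in auto)
    also have "\<dots> \<subseteq> prod_id P (prodl Ps)"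
      using Cons.IH[OF M ok(1)] ok prodl_OK by (intro prod_mono) auto
    finally show ?thesis by simp
  qed
qed simp

lemma prodl_append:
  assumes "\<And>P. P \<in> set (As @ Bs) \<Longrightarrow> P \<subseteq> OK K"
  shows "prodl (As @ Bs) \<subseteq> prod_id (prodl As) (prodl Bs)"
  using assms
proof (induction As)
  case Nil
  have "prodl Bs \<subseteq> prod_id (OK K) (prodl Bs)"
  proof
    fix y assume "y \<in> prodl Bs"
    thus "y \<in> prod_id (OK K) (prodl Bs)" using prod_mem[of 1 "OK K" y] by auto
  qed
  thus ?case by simp
next
  case (Cons P As)
  have ok: "P \<subseteq> OK K" "prodl As \<subseteq> OK K" "prodl Bs \<subseteq> OK K" "prodl (As @ Bs) \<subseteq> OK K"
    by (rule Cons.prems(1), simp) ((rule prodl_OK, rule Cons.prems(1), simp)+)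
  have "prodl ((P # As) @ Bs) = prod_id P (prodl (As @ Bs))" by simp
  also have "\<dots> \<subseteq> prod_id P (prod_id (prodl As) (prodl Bs))"
    using Cons ok prod_OK by (intro prod_mono) auto
  also have "\<dots> \<subseteq> prod_id (prod_id P (prodl As)) (prodl Bs)"
    by (rule prod_assoc_sub) (use ok in auto)
  finally show ?case by simp
qed

lemma prime_prodl:
  assumes "primei M" "\<And>P. P \<in> set Ps \<Longrightarrow> P \<subseteq> OK K" "prodl Ps \<subseteq> M"
  shows "\<exists>P\<in>set Ps. P \<subseteq> M"
  using assms(2,3)
proof (induction Ps)
  case Nil thus ?case using assms(1) unfolding primei_def by auto
next
  case (Cons P Ps)
  show ?case
  proof (cases "P \<subseteq> M")
    case True thus ?thesis by simp
  next
    case False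
    then obtain p where p: "p \<in> P" "p \<notin> M" by blast
    have "prodl Ps \<subseteq> M"
    proof
      fix q assume q: "q \<in> prodl Ps"
      have "p * q \<in> M" using Cons.prems prod_mem[OF p(1) q] by auto
      moreover have "prodl Ps \<subseteq> OK K" by (rule prodl_OK, rule Cons.prems(1), simp)
      moreover have "P \<subseteq> OK K" by (rule Cons.prems(1), simp)
      ultimately have "p \<in> OK K" "q \<in> OK K" "p * q \<in> M" using p q by auto
      thus "q \<in> M" using assms(1) p unfolding primei_def by blast
    qed
    thus ?thesis using Cons by auto
  qed
qed

lemma plus_el_ideal: assumes L: "is_ideal K L" and x: "x \<in> OK K" shows "is_ideal K (plus_el L x)"
proof -
  have 1: "plus_el L x \<subseteq> OK K"
  proof
    fix y assume "y \<in> plus_el L x"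
    then obtain p r where "y = p + r * x" "p \<in> L" "r \<in> OK K" unfolding plus_el_def by blast
    thus "y \<in> OK K" using ideal_OK[OF L] x by auto
  qed
  have 2: "0 \<in> plus_el L x"
  proof -
    have "(0::complex) = 0 + 0 * x" by simp
    thus ?thesis unfolding plus_el_def using idealD(2)[OF L] OK0 by blast
  qed
  have 3: "\<forall>y\<in>plus_el L x. \<forall>z\<in>plus_el L x. y + z \<in> plus_el L x"
  proof (intro ballI)
    fix y z assume "y \<in> plus_el L x" "z \<in> plus_el L x"
    then obtain p r p' r' where h: "y = p + r * x" "z = p' + r' * x" "p \<in> L" "r \<in> OK K" "p' \<in> L" "r' \<in> OK K"
      unfolding plus_el_def by blast
    have "y + z = (p + p') + (r + r') * x" using h by (simp add: algebra_simps)
    moreover have "p + p' \<in> L" using idealD(3)[OF L] h by blast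
    moreover have "r + r' \<in> OK K" using h by blast
    ultimately show "y + z \<in> plus_el L x" unfolding plus_el_def by blast
  qed
  have 4: "\<forall>t\<in>OK K. \<forall>y\<in>plus_el L x. t * y \<in> plus_el L x"
  proof (intro ballI)
    fix t y assume t: "t \<in> OK K" and "y \<in> plus_el L x"
    then obtain p r where h: "y = p + r * x" "p \<in> L" "r \<in> OK K" unfolding plus_el_def by blast
    have "t * y = (t * p) + (t * r) * x" using h by (simp add: algebra_simps)
    moreover have "t * p \<in> L" using idealD(4)[OF L] h t by blast
    moreover have "t * r \<in> OK K" using h t by blast
    ultimately show "t * y \<in> plus_el L x" unfolding plus_el_def by blast
  qed
  show ?thesis unfolding is_ideal_def using 1 2 3 4 by blast
qed

lemma plus_el_sup: assumes "is_ideal K L" shows "L \<subseteq> plus_el L x"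
proof
  fix y assume "y \<in> L"
  moreover have "y = y + 0 * x" by simp
  ultimately show "y \<in> plus_el L x" unfolding plus_el_def using OK0 by blast
qed

lemma plus_el_mem: "is_ideal K L \<Longrightarrow> x \<in> plus_el L x"
  unfolding plus_el_def by (intro CollectI exI[of _ 0] exI[of _ 1]) (auto intro: idealD(2))

lemma maxi_prime: assumes "maxi P" shows "primei P"
  unfolding primei_def
proof (intro conjI ballI impI)
  have P: "is_ideal K P" "1 \<notin> P" using assms unfolding maxi_def by auto
  show "is_ideal K P" "1 \<notin> P" by fact+
  fix x y assume x: "x \<in> OK K" and y: "y \<in> OK K" and xy: "x * y \<in> P"
  show "x \<in> P \<or> y \<in> P"
  proof (rule ccontr)
    assume "\<not> (x \<in> P \<or> y \<in> P)"
    hence nx: "x \<notin> P" and ny: "y \<notin> P" by auto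
    have "plus_el P x \<noteq> P" using plus_el_mem[OF P(1), of x] nx by auto
    hence "1 \<in> plus_el P x" using assms plus_el_ideal[OF P(1) x] plus_el_sup[OF P(1)] unfolding maxi_def by blast
    then obtain p r where pr1: "1 = p + r * x" "p \<in> P" "r \<in> OK K" unfolding plus_el_def by blast
    have "plus_el P y \<noteq> P" using plus_el_mem[OF P(1), of y] ny by auto
    hence "1 \<in> plus_el P y" using assms plus_el_ideal[OF P(1) y] plus_el_sup[OF P(1)] unfolding maxi_def by blast
    then obtain p' r' where pr2: "1 = p' + r' * y" "p' \<in> P" "r' \<in> OK K" unfolding plus_el_def by blast
    have pOK: "p \<in> OK K" "p' \<in> OK K" using pr1 pr2 ideal_OK[OF P(1)] by auto
    have "1 = (p + r * x) * (p' + r' * y)" using pr1 pr2 by simp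
    also have "\<dots> = p * p' + p * (r' * y) + (r * x) * p' + (r * r') * (x * y)" by (simp add: algebra_simps)
    also have "\<dots> \<in> P"
    proof -
      have a1: "p * p' \<in> P" by (rule ideal_mult_right[OF P(1) pr1(2) pOK(2)])
      have a2: "p * (r' * y) \<in> P" by (rule ideal_mult_right[OF P(1) pr1(2)]) (use pr2 y in auto)
      have a3: "(r * x) * p' \<in> P" by (rule idealD(4)[OF P(1)]) (use pr1 x pr2 in auto)
      have a4: "(r * r') * (x * y) \<in> P" by (rule idealD(4)[OF P(1)]) (use pr1 pr2 xy in auto)
      show ?thesis using a1 a2 a3 a4 idealD(3)[OF P(1)] by presburger
    qed
    finally show False using P(2) by simp
  qed
qed

end


context nfb begin

lemma reps2:
  assumes a: "a \<in> OK K" "a \<noteq> 0"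
  obtains F where "finite F" "F \<subseteq> OK K" "\<And>x. x \<in> OK K \<Longrightarrow> \<exists>y\<in>F. x - y \<in> pr a"
proof -
  obtain F n r0 where F: "finite F" "F \<subseteq> OK K" "n > (0::int)" "r0 \<in> OK K" "of_int n = a * r0"
    and rep: "\<And>x. x \<in> OK K \<Longrightarrow> \<exists>y\<in>F. \<exists>q. x = y + (\<Sum>j<d. of_int (q j) * (of_int n * w!j))"
    by (rule reps[OF a]) blast
  have pa: "is_ideal K (pr a)" by (rule pr_ideal[OF a(1)])
  have "\<exists>y\<in>F. x - y \<in> pr a" if x: "x \<in> OK K" for x
  proof -
    obtain y q where y: "y \<in> F" "x = y + (\<Sum>j<d. of_int (q j) * (of_int n * w!j))" using rep[OF x] by blast
    have "x - y = (\<Sum>j<d. of_int (q j) * (of_int n * w!j))" using y by simp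
    also have "\<dots> \<in> pr a"
    proof (rule ideal_sum[OF pa])
      fix j assume j: "j \<in> {..<d}"
      have "of_int (q j) * (of_int n * w!j) = (of_int (q j) * r0 * w!j) * a" using F(5) by (simp add: mult_ac)
      also have "\<dots> \<in> pr a" using F(4) wOK j by (intro pr_memI) auto
      finally show "of_int (q j) * (of_int n * w!j) \<in> pr a" .
    qed
    finally show ?thesis using y by blast
  qed
  thus ?thesis using that F by blast
qed

lemma fin_ideals:
  assumes a: "a \<in> OK K" "a \<noteq> 0"
  shows "finite {I. is_ideal K I \<and> pr a \<subseteq> I}"
proof -
  obtain F where F: "finite F" "F \<subseteq> OK K" "\<And>x. x \<in> OK K \<Longrightarrow> \<exists>y\<in>F. x - y \<in> pr a"
    by (rule reps2[OF a]) blast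
  let ?S = "{I. is_ideal K I \<and> pr a \<subseteq> I}"
  have sub: "I \<subseteq> J" if I: "I \<in> ?S" and J: "J \<in> ?S" and eq: "I \<inter> F = J \<inter> F" for I J
  proof
    fix x assume x: "x \<in> I"
    have xOK: "x \<in> OK K" using x I ideal_OK by blast
    obtain y where y: "y \<in> F" "x - y \<in> pr a" using F(3)[OF xOK] by blast
    have xyI: "x - y \<in> I" using I y(2) by auto
    have "x - (x - y) \<in> I" using ideal_diff[of I x "x - y"] I x xyI by simp
    hence "y \<in> I" by simp
    hence "y \<in> J" using eq y(1) by blast
    have "x = y + (x - y)" by simp
    also have "\<dots> \<in> J" using J \<open>y \<in> J\<close> y(2) by (intro idealD(3)) auto
    finally show "x \<in> J" .
  qed
  have "inj_on (\<lambda>I. I \<inter> F) ?S"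
    by (rule inj_onI) (use sub in blast)
  moreover have "finite ((\<lambda>I. I \<inter> F) ` ?S)"
    by (rule finite_subset[of _ "Pow F"]) (use F(1) in auto)
  ultimately show ?thesis using finite_imageD by blast
qed

lemma ideal_induct:
  assumes a: "a \<in> OK K" "a \<noteq> 0"
    and step: "\<And>I. is_ideal K I \<Longrightarrow> pr a \<subseteq> I \<Longrightarrow> (\<And>J. is_ideal K J \<Longrightarrow> I \<subset> J \<Longrightarrow> P J) \<Longrightarrow> P I"
  shows "is_ideal K I \<Longrightarrow> pr a \<subseteq> I \<Longrightarrow> P I"
proof (induction "card {J. is_ideal K J \<and> I \<subseteq> J}" arbitrary: I rule: less_induct)
  case less
  show ?case
  proof (rule step[OF less.prems])
    fix J assume J: "is_ideal K J" "I \<subset> J"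
    have fin: "finite {L. is_ideal K L \<and> I \<subseteq> L}"
      by (rule finite_subset[OF _ fin_ideals[OF a]]) (use less.prems in auto)
    have "{L. is_ideal K L \<and> J \<subseteq> L} \<subset> {L. is_ideal K L \<and> I \<subseteq> L}"
      using J less.prems by auto
    hence "card {L. is_ideal K L \<and> J \<subseteq> L} < card {L. is_ideal K L \<and> I \<subseteq> L}"
      by (rule psubset_card_mono[OF fin])
    thus "P J" using J less.prems by (intro less.hyps) auto
  qed
qed


lemma prime_maxi:
  assumes a: "a \<in> OK K" "a \<noteq> 0" and P: "primei P" "pr a \<subseteq> P"
  shows "maxi P"
proof -
  have Pi: "is_ideal K P" "1 \<notin> P" and Pp: "\<And>x y. x \<in> OK K \<Longrightarrow> y \<in> OK K \<Longrightarrow> x * y \<in> P \<Longrightarrow> x \<in> P \<or> y \<in> P"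
    using P(1) unfolding primei_def by auto
  obtain F where F: "finite F" "F \<subseteq> OK K" "\<And>x. x \<in> OK K \<Longrightarrow> \<exists>y\<in>F. x - y \<in> pr a"
    by (rule reps2[OF a]) blast
  have pa: "is_ideal K (pr a)" by (rule pr_ideal[OF a(1)])
  have "1 \<in> J" if J: "is_ideal K J" "P \<subseteq> J" "J \<noteq> P" for J
  proof -
    obtain x where x: "x \<in> J" "x \<notin> P" using J by blast
    have xOK: "x \<in> OK K" using x J ideal_OK by blast
    have "\<forall>k. \<exists>y. y \<in> F \<and> x ^ k - y \<in> pr a" using F(3) xOK by blast
    then obtain Y where Y: "\<And>k. Y k \<in> F" "\<And>k. x ^ k - Y k \<in> pr a" by metis
    define A where "A = {..card F}"
    have "\<not> inj_on Y A"
    proof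
      assume "inj_on Y A"
      hence "card (Y ` A) = card A" by (rule card_image)
      moreover have "card (Y ` A) \<le> card F" using Y(1) F(1) by (intro card_mono) auto
      moreover have "card A = card F + 1" unfolding A_def by simp
      ultimately show False by simp
    qed
    then obtain i j where ij: "i \<noteq> j" "Y i = Y j" unfolding inj_on_def by blast
    have main: "1 \<in> J" if ij': "i' < j'" "Y i' = Y j'" for i' j'
    proof -
      have "x ^ j' - x ^ i' = (x ^ j' - Y j') - (x ^ i' - Y i')" using ij' by simp
      also have "\<dots> \<in> pr a" by (rule ideal_diff[OF pa Y(2) Y(2)])
      finally have d1: "x ^ j' - x ^ i' \<in> P" using P(2) by blast
      obtain m where m: "j' - i' = Suc m" using ij' by (metis Suc_diff_Suc)
      have "x ^ j' = x ^ i' * x ^ Suc m" using ij' m by (metis le_add_diff_inverse less_imp_le power_add)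
      hence "x ^ j' - x ^ i' = x ^ i' * (x ^ Suc m - 1)" by (simp add: algebra_simps)
      with d1 have d2: "x ^ i' * (x ^ Suc m - 1) \<in> P" by simp
      have nP: "x ^ k \<notin> P" for k
      proof (induction k)
        case 0 thus ?case using Pi by simp
      next
        case (Suc k)
        show ?case
        proof
          assume "x ^ Suc k \<in> P"
          hence "x * x ^ k \<in> P" by simp
          thus False using Pp[of x "x ^ k"] xOK Suc x(2) by auto
        qed
      qed
      have "x ^ Suc m - 1 \<in> P" using Pp[OF _ _ d2] nP xOK by auto
      hence e1: "x ^ Suc m - 1 \<in> J" using J by blast
      have e2: "x ^ Suc m \<in> J" using idealD(4)[OF J(1), of "x ^ m" x] xOK x(1) OKpow by (simp add: mult.commute)
      have "x ^ Suc m - (x ^ Suc m - 1) \<in> J" by (rule ideal_diff[OF J(1) e2 e1])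
      thus ?thesis by simp
    qed
    show ?thesis
    proof (cases "i < j")
      case True thus ?thesis using main ij by blast
    next
      case False
      hence "j < i" using ij by simp
      thus ?thesis using main ij by metis
    qed
  qed
  thus ?thesis unfolding maxi_def using Pi by blast
qed

lemma exists_maxi:
  assumes a: "a \<in> OK K" "a \<noteq> 0" and I: "is_ideal K I" "pr a \<subseteq> I" "1 \<notin> I"
  shows "\<exists>M. maxi M \<and> I \<subseteq> M"
proof -
  have "1 \<notin> I \<longrightarrow> (\<exists>M. maxi M \<and> I \<subseteq> M)"
  proof (rule ideal_induct[OF a _ I(1,2)])
    fix L assume L: "is_ideal K L" "pr a \<subseteq> L"
      and IH: "\<And>J. is_ideal K J \<Longrightarrow> L \<subset> J \<Longrightarrow> 1 \<notin> J \<longrightarrow> (\<exists>M. maxi M \<and> J \<subseteq> M)"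
    show "1 \<notin> L \<longrightarrow> (\<exists>M. maxi M \<and> L \<subseteq> M)"
    proof
      assume L1: "1 \<notin> L"
      show "\<exists>M. maxi M \<and> L \<subseteq> M"
      proof (cases "maxi L")
        case True thus ?thesis by blast
      next
        case False
        then obtain J where J: "is_ideal K J" "L \<subseteq> J" "J \<noteq> L" "1 \<notin> J"
          using L L1 unfolding maxi_def by blast
        then obtain M where "maxi M" "J \<subseteq> M" using IH[of J] by blast
        thus ?thesis using J by blast
      qed
    qed
  qed
  thus ?thesis using I(3) by blast
qed

lemma contains_prod:
  assumes a: "a \<in> OK K" "a \<noteq> 0" and L: "is_ideal K L" "pr a \<subseteq> L"
  shows "\<exists>Ps. (\<forall>P\<in>set Ps. maxi P) \<and> prodl Ps \<subseteq> L"
proof (rule ideal_induct[OF a _ L])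
  fix L assume L: "is_ideal K L" "pr a \<subseteq> L"
    and IH: "\<And>J. is_ideal K J \<Longrightarrow> L \<subset> J \<Longrightarrow> \<exists>Ps. (\<forall>P\<in>set Ps. maxi P) \<and> prodl Ps \<subseteq> J"
  show "\<exists>Ps. (\<forall>P\<in>set Ps. maxi P) \<and> prodl Ps \<subseteq> L"
  proof (cases "1 \<in> L")
    case True
    hence "L = OK K" using ideal_one L by blast
    thus ?thesis by (intro exI[of _ "[]"]) auto
  next
    case L1: False
    show ?thesis
    proof (cases "primei L")
      case True
      hence "maxi L" using prime_maxi[OF a _ L(2)] by blast
      moreover have "prodl [L] \<subseteq> L" using prod_sub_left[OF L(1), of "OK K"] by simp
      ultimately show ?thesis by (intro exI[of _ "[L]"]) auto
    next
      case False
      then obtain x y where xy: "x \<in> OK K" "y \<in> OK K" "x * y \<in> L" "x \<notin> L" "y \<notin> L"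
        using L L1 unfolding primei_def by blast
      define L1 where "L1 = plus_el L x"
      define L2 where "L2 = plus_el L y"
      have L1i: "is_ideal K L1" "L \<subset> L1"
      proof -
        show "is_ideal K L1" unfolding L1_def by (rule plus_el_ideal[OF L(1) xy(1)])
        have "L \<subseteq> L1" "x \<in> L1" unfolding L1_def by (rule plus_el_sup[OF L(1)], rule plus_el_mem[OF L(1)])
        thus "L \<subset> L1" using xy(4) by blast
      qed
      have L2i: "is_ideal K L2" "L \<subset> L2"
      proof -
        show "is_ideal K L2" unfolding L2_def by (rule plus_el_ideal[OF L(1) xy(2)])
        have "L \<subseteq> L2" "y \<in> L2" unfolding L2_def by (rule plus_el_sup[OF L(1)], rule plus_el_mem[OF L(1)])
        thus "L \<subset> L2" using xy(5) by blast
      qed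
      obtain Ps1 where P1: "\<forall>P\<in>set Ps1. maxi P" "prodl Ps1 \<subseteq> L1" using IH[OF L1i] by blast
      obtain Ps2 where P2: "\<forall>P\<in>set Ps2. maxi P" "prodl Ps2 \<subseteq> L2" using IH[OF L2i] by blast
      have okP: "P \<subseteq> OK K" if "P \<in> set (Ps1 @ Ps2)" for P
      proof -
        have "maxi P" using that P1 P2 by auto
        hence "is_ideal K P" by (simp add: maxi_def)
        thus ?thesis by (rule idealD(1))
      qed
      have "prodl (Ps1 @ Ps2) \<subseteq> prod_id (prodl Ps1) (prodl Ps2)" by (rule prodl_append[OF okP])
      also have "\<dots> \<subseteq> prod_id L1 L2"
        by (rule prod_mono[OF P1(2) P2(2) idealD(1)[OF L1i(1)] idealD(1)[OF L2i(1)]])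
      also have "\<dots> \<subseteq> L"
      proof (rule prod_least[OF L(1)])
        fix u v assume u: "u \<in> L1" and v: "v \<in> L2"
        obtain p r where pr1: "u = p + r * x" "p \<in> L" "r \<in> OK K" using u unfolding L1_def plus_el_def by blast
        obtain p' r' where pr2: "v = p' + r' * y" "p' \<in> L" "r' \<in> OK K" using v unfolding L2_def plus_el_def by blast
        have pOK: "p \<in> OK K" "p' \<in> OK K" using pr1 pr2 ideal_OK[OF L(1)] by auto
        have eq: "u * v = ((p * p' + p * (r' * y)) + (r * x) * p') + (r * r') * (x * y)"
          using pr1 pr2 by (simp add: algebra_simps)
        have a1: "p * p' \<in> L" by (rule ideal_mult_right[OF L(1) pr1(2) pOK(2)])
        have a2: "p * (r' * y) \<in> L" by (rule ideal_mult_right[OF L(1) pr1(2)]) (use pr2 xy in auto)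
        have a3: "(r * x) * p' \<in> L" by (rule idealD(4)[OF L(1)]) (use pr1 xy pr2 in auto)
        have a4: "(r * r') * (x * y) \<in> L" by (rule idealD(4)[OF L(1)]) (use pr1 pr2 xy in auto)
        show "u * v \<in> L" unfolding eq
          by (rule idealD(3)[OF L(1) idealD(3)[OF L(1) idealD(3)[OF L(1) a1 a2] a3] a4])
      qed
      finally show ?thesis using P1 P2 by (intro exI[of _ "Ps1 @ Ps2"]) auto
    qed
  qed
qed

end


context nfb begin

lemma KL:
  assumes L: "is_ideal K L" "L \<noteq> {0}" "1 \<notin> L"
  shows "\<exists>z\<in>K. z \<notin> OK K \<and> (\<forall>y\<in>L. z * y \<in> OK K)"
proof -
  obtain a where a: "a \<in> L" "a \<noteq> 0" using L(2) idealD(2)[OF L(1)] by blast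
  have aOK: "a \<in> OK K" using a L ideal_OK by blast
  have paL: "pr a \<subseteq> L" by (rule pr_least[OF L(1) a(1)])
  obtain M where M: "maxi M" "L \<subseteq> M" using exists_maxi[OF aOK a(2) L(1) paL L(3)] by blast
  have Mi: "is_ideal K M" "1 \<notin> M" using M(1) unfolding maxi_def by auto
  have pa: "is_ideal K (pr a)" by (rule pr_ideal[OF aOK])
  define Q where "Q Ps \<longleftrightarrow> (\<forall>P\<in>set Ps. maxi P) \<and> prodl Ps \<subseteq> pr a" for Ps
  have "\<exists>Ps. Q Ps" using contains_prod[OF aOK a(2) pa order_refl] unfolding Q_def by blast
  hence "\<exists>n. \<exists>Ps. Q Ps \<and> length Ps = n" by blast
  define n where "n = (LEAST n. \<exists>Ps. Q Ps \<and> length Ps = n)"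
  obtain Ps where Ps: "Q Ps" "length Ps = n"
    using LeastI_ex[OF \<open>\<exists>n. \<exists>Ps. Q Ps \<and> length Ps = n\<close>] n_def by blast
  have minPs: "length Ps \<le> length Qs" if "Q Qs" for Qs
    unfolding Ps(2) n_def by (rule Least_le) (use that in blast)
  have okPs: "P \<subseteq> OK K" if "P \<in> set Ps" for P
  proof -
    have "maxi P" using that Ps(1) unfolding Q_def by auto
    hence "is_ideal K P" by (simp add: maxi_def)
    thus ?thesis by (rule idealD(1))
  qed
  have "prodl Ps \<subseteq> M" using Ps(1) paL M(2) unfolding Q_def by blast
  then obtain P where P: "P \<in> set Ps" "P \<subseteq> M"
    using prime_prodl[OF maxi_prime[OF M(1)] okPs] by blast
  have "maxi P" using P(1) Ps(1) unfolding Q_def by auto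
  hence PM: "P = M" using P(2) Mi unfolding maxi_def by blast
  hence MPs: "M \<in> set Ps" using P(1) by simp
  define Ps' where "Ps' = remove1 M Ps"
  have setPs': "set Ps' \<subseteq> set Ps" unfolding Ps'_def by (rule set_remove1_subset)
  have lenPs': "length Ps' < length Ps"
    unfolding Ps'_def using MPs using length_pos_if_in_set[OF MPs] by (simp add: length_remove1)
  have "\<not> Q Ps'" using minPs lenPs' by fastforce
  moreover have "\<forall>P\<in>set Ps'. maxi P" using setPs' Ps(1) unfolding Q_def by blast
  ultimately obtain b where b: "b \<in> prodl Ps'" "b \<notin> pr a" unfolding Q_def by blast
  have okPs': "P \<subseteq> OK K" if "P \<in> set Ps'" for P using okPs setPs' that by blast
  have bOK: "b \<in> OK K" using b(1) prodl_OK[OF okPs'] by blast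
  have yb: "y * b \<in> pr a" if y: "y \<in> L" for y
  proof -
    have "y * b \<in> prod_id M (prodl Ps')" using prod_mem[of y M b "prodl Ps'"] y M(2) b(1) by blast
    also have "\<dots> \<subseteq> prodl Ps" unfolding Ps'_def by (rule prodl_remove[OF MPs okPs])
    also have "\<dots> \<subseteq> pr a" using Ps(1) unfolding Q_def by blast
    finally show ?thesis .
  qed
  define z where "z = b / a"
  have zK: "z \<in> K" unfolding z_def using bOK aOK by auto
  have "z \<notin> OK K"
  proof
    assume "z \<in> OK K"
    hence "z * a \<in> pr a" by (rule pr_memI)
    thus False using b(2) a(2) unfolding z_def by simp
  qed
  moreover have "z * y \<in> OK K" if y: "y \<in> L" for y
  proof -
    obtain r where r: "y * b = r * a" "r \<in> OK K" using yb[OF y] unfolding pr_def by blast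
    have "z * y = (y * b) / a" unfolding z_def by simp
    also have "\<dots> = r" using r(1) a(2) by simp
    finally show ?thesis using r(2) by simp
  qed
  ultimately show ?thesis using zK by blast
qed

definition inv_id :: "complex set \<Rightarrow> complex set" where
  "inv_id I = {z \<in> K. \<forall>y\<in>I. z * y \<in> OK K}"

definition LI :: "complex set \<Rightarrow> complex set" where
  "LI I = gen_ideal K {u * v | u v. u \<in> I \<and> v \<in> inv_id I}"

lemma one_LI:
  assumes I: "is_ideal K I" "I \<noteq> {0}"
  shows "1 \<in> LI I"
proof (rule ccontr)
  assume n1: "1 \<notin> LI I"
  have inv_OK: "u * v \<in> OK K" if "u \<in> I" "v \<in> inv_id I" for u v
  proof -
    have "v * u \<in> OK K" using that unfolding inv_id_def by blast
    thus ?thesis by (simp only: mult.commute)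
  qed
  have gen_OK: "{u * v | u v. u \<in> I \<and> v \<in> inv_id I} \<subseteq> OK K"
    using inv_OK by blast
  have Li: "is_ideal K (LI I)" unfolding LI_def by (rule gen_ideal_ideal[OF gen_OK])
  have genL: "u * v \<in> LI I" if "u \<in> I" "v \<in> inv_id I" for u v
  proof -
    have "u * v \<in> {u * v | u v. u \<in> I \<and> v \<in> inv_id I}" using that by blast
    thus ?thesis unfolding LI_def by (rule subsetD[OF gen_ideal_sup])
  qed
  have one_inv: "1 \<in> inv_id I" unfolding inv_id_def using ideal_OK[OF I(1)] by simp
  obtain a where a: "a \<in> I" "a \<noteq> 0" using I(2) idealD(2)[OF I(1)] by blast
  have aOK: "a \<in> OK K" using a I ideal_OK by blast
  have "a \<in> LI I" using genL[OF a(1) one_inv] by simp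
  hence "LI I \<noteq> {0}" using a(2) by blast
  then obtain z where z: "z \<in> K" "z \<notin> OK K" "\<And>y. y \<in> LI I \<Longrightarrow> z * y \<in> OK K"
    using KL[OF Li _ n1] by blast
  define M where "M = {a * v | v. v \<in> inv_id I}"
  have inv_mult: "r * v \<in> inv_id I" if h: "r \<in> OK K" "v \<in> inv_id I" for r v
  proof -
    have "r * v \<in> K" using h unfolding inv_id_def by (intro Kmult) auto
    moreover have "r * v * y \<in> OK K" if "y \<in> I" for y
    proof -
      have "v * y \<in> OK K" using h(2) that unfolding inv_id_def by blast
      hence "r * (v * y) \<in> OK K" using h(1) by (rule OKmult[rotated])
      thus ?thesis by (simp only: mult.assoc)
    qed
    ultimately show ?thesis unfolding inv_id_def by blast
  qed
  have inv_add: "v + v' \<in> inv_id I" if h: "v \<in> inv_id I" "v' \<in> inv_id I" for v v'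
  proof -
    have "v + v' \<in> K" using h unfolding inv_id_def by (intro Kadd) auto
    moreover have "(v + v') * y \<in> OK K" if "y \<in> I" for y
    proof -
      have "v * y \<in> OK K" "v' * y \<in> OK K" using h that unfolding inv_id_def by blast+
      hence "v * y + v' * y \<in> OK K" by (rule OKadd)
      thus ?thesis by (simp only: distrib_right)
    qed
    ultimately show ?thesis unfolding inv_id_def by blast
  qed
  have zinv: "z * v \<in> inv_id I" if "v \<in> inv_id I" for v
  proof -
    have "z * v \<in> K" using that z(1) unfolding inv_id_def by auto
    moreover have "z * v * y \<in> OK K" if "y \<in> I" for y
      using z(3)[OF genL[OF \<open>y \<in> I\<close> \<open>v \<in> inv_id I\<close>]] by (simp add: mult_ac)
    ultimately show ?thesis unfolding inv_id_def by blast
  qed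
  have Mi: "is_ideal K M"
  proof -
    have 1: "M \<subseteq> OK K" unfolding M_def using a(1) inv_OK by blast
    have 2: "0 \<in> M" unfolding M_def inv_id_def by (intro CollectI exI[of _ 0]) auto
    have 3: "\<forall>x\<in>M. \<forall>y\<in>M. x + y \<in> M"
    proof (intro ballI)
      fix x y assume "x \<in> M" "y \<in> M"
      then obtain v v' where "x = a * v" "y = a * v'" "v \<in> inv_id I" "v' \<in> inv_id I" unfolding M_def by blast
      moreover have "a * v + a * v' = a * (v + v')" by (simp add: distrib_left)
      ultimately show "x + y \<in> M" unfolding M_def using inv_add by blast
    qed
    have 4: "\<forall>r\<in>OK K. \<forall>x\<in>M. r * x \<in> M"
    proof (intro ballI)
      fix r x assume "r \<in> OK K" "x \<in> M"
      then obtain v where "x = a * v" "v \<in> inv_id I" unfolding M_def by blast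
      moreover have "r * (a * v) = a * (r * v)" by (simp add: mult_ac)
      ultimately show "r * x \<in> M" unfolding M_def using inv_mult \<open>r \<in> OK K\<close> by blast
    qed
    show ?thesis unfolding is_ideal_def using 1 2 3 4 by blast
  qed
  have aM: "a \<in> M" unfolding M_def using one_inv by (intro CollectI exI[of _ 1]) auto
  have zM: "z * x \<in> M" if xM: "x \<in> M" for x
  proof -
    obtain v where v: "x = a * v" "v \<in> inv_id I" using xM unfolding M_def by blast
    have "z * x = a * (z * v)" using v by (simp add: mult_ac)
    thus ?thesis unfolding M_def using zinv[OF v(2)] by blast
  qed
  have "algebraic_int z" by (rule stable_int[OF aOK a(2) Mi aM zM])
  thus False using z(1,2) by (auto simp: OK_def)
qed

lemma inv_cancel_sub:
  assumes I: "is_ideal K I" "I \<noteq> {0}" and J: "is_ideal K J" and eq: "inv_id I = inv_id J"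
  shows "J \<subseteq> I"
proof
  fix x assume x: "x \<in> J"
  have "LI I \<subseteq> col I x" unfolding LI_def
  proof (rule gen_ideal_least[OF col_ideal[OF I(1)]])
    show "{u * v | u v. u \<in> I \<and> v \<in> inv_id I} \<subseteq> col I x"
    proof
      fix t assume "t \<in> {u * v | u v. u \<in> I \<and> v \<in> inv_id I}"
      then obtain u v where t: "t = u * v" "u \<in> I" "v \<in> inv_id I" by blast
      have vx: "v * x \<in> OK K" using t(3) x eq unfolding inv_id_def by auto
      have "v * u \<in> OK K" using t unfolding inv_id_def by blast
      hence tOK: "t \<in> OK K" using t(1) by (simp only: mult.commute)
      have "x * t = (v * x) * u" using t by (simp add: mult_ac)
      also have "\<dots> \<in> I" using idealD(4)[OF I(1) vx t(2)] .
      finally show "t \<in> col I x" unfolding col_def using tOK by blast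
    qed
  qed
  hence "1 \<in> col I x" using one_LI[OF I] by blast
  thus "x \<in> I" unfolding col_def by simp
qed

lemma inv_cancel:
  assumes "is_ideal K I" "I \<noteq> {0}" "is_ideal K J" "J \<noteq> {0}" "inv_id I = inv_id J"
  shows "I = J"
  using inv_cancel_sub[of I J] inv_cancel_sub[of J I] assms by auto

end


context nfb begin

lemma frac_two:
  assumes a: "a \<in> OK K" and b: "b \<in> OK K" "b \<noteq> 0"
  shows "frac_div K b (two a b) = {t \<in> OK K. t * a / b \<in> OK K}"
proof
  show "frac_div K b (two a b) \<subseteq> {t \<in> OK K. t * a / b \<in> OK K}"
  proof
    fix t assume "t \<in> frac_div K b (two a b)"
    then obtain z where z: "t = b * z" "z \<in> K" "\<And>y. y \<in> two a b \<Longrightarrow> z * y \<in> OK K"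
      unfolding frac_div_def by blast
    have "z * b \<in> OK K" "z * a \<in> OK K" using z(3) two_mem[OF a b(1)] by auto
    moreover have "t * a / b = z * a" using z(1) b(2) by simp
    ultimately show "t \<in> {t \<in> OK K. t * a / b \<in> OK K}" using z(1) by (simp add: mult.commute)
  qed
next
  show "{t \<in> OK K. t * a / b \<in> OK K} \<subseteq> frac_div K b (two a b)"
  proof
    fix t assume t: "t \<in> {t \<in> OK K. t * a / b \<in> OK K}"
    define z where "z = t / b"
    have zK: "z \<in> K" unfolding z_def using t b by auto
    have "z * y \<in> OK K" if y: "y \<in> two a b" for y
    proof -
      obtain r s where rs: "y = r * a + s * b" "r \<in> OK K" "s \<in> OK K" using y unfolding two_def by blast
      have "z * y = r * (t * a / b) + s * t" unfolding z_def rs(1) using b(2) by (simp add: field_simps)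
      moreover have "r * (t * a / b) + s * t \<in> OK K" using rs t by (intro OKadd OKmult) auto
      ultimately show ?thesis by simp
    qed
    moreover have "t = b * z" unfolding z_def using b(2) by simp
    ultimately show "t \<in> frac_div K b (two a b)" unfolding frac_div_def using zK by blast
  qed
qed

lemma reduced_inseverable:
  assumes a: "a \<in> OK K" and b: "b \<in> OK K" and r: "reduced_frac K a b"
  shows "inseverable K (two a b)"
  unfolding inseverable_def
proof (intro conjI allI impI)
  have b0: "b \<noteq> 0" using r unfolding reduced_frac_def by auto
  show "is_ideal K (two a b)" by (rule two_ideal[OF a b])
  show "two a b \<noteq> {0}" using two_mem[OF a b] b0 by auto
  fix J assume J: "is_ideal K J \<and> principal_ideal K J \<and> two a b \<subseteq> J"
  then obtain x where x: "x \<in> OK K" "J = gen_ideal K {x}" unfolding principal_ideal_def by blast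
  have Jx: "J = pr x" using x gen_single by simp
  have "a \<in> pr x" "b \<in> pr x" using J two_mem[OF a b] Jx by auto
  then obtain c c' where c: "a = c * x" "c \<in> OK K" "b = c' * x" "c' \<in> OK K" unfolding pr_def by blast
  have "OK_dvd K x a" "OK_dvd K x b" unfolding OK_dvd_def using c x by (auto simp: mult.commute)
  hence "OK_unit K x" using r x unfolding reduced_frac_def by blast
  then obtain y where y: "y \<in> OK K" "x * y = 1" unfolding OK_unit_def by blast
  have "1 \<in> pr x" using pr_memI[OF y(1), of x] y(2) by (simp add: mult.commute)
  thus "J = OK K" using ideal_one[OF pr_ideal[OF x(1)]] Jx by simp
qed

lemma inv_id_one: "is_ideal K I \<Longrightarrow> 1 \<in> inv_id I"
  unfolding inv_id_def using ideal_OK by simp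

lemma frac_div_inv: "frac_div K b I = (\<lambda>x. b * x) ` inv_id I"
  unfolding frac_div_def inv_id_def by simp

lemma image_mult_cancel:
  assumes "(b::complex) \<noteq> 0" "(\<lambda>x. b * x) ` A = (\<lambda>x. b * x) ` B"
  shows "A = B"
proof -
  have "inj (\<lambda>x. b * x)" using assms(1) by (intro injI) simp
  thus ?thesis using assms(2) by (simp add: inj_image_eq_iff)
qed

end


theorem proposition3p3:
  fixes K :: "complex set" and a1 b1 b2 :: complex
  assumes "number_field K"
    and "a1 \<in> OK K" and "b1 \<in> OK K"
    and "b1 \<noteq> 0" and "\<not> OK_unit K b1"
    and "reduced_frac K a1 b1"
    and "inseverable K (gen_ideal K {a1, b1})"
    and "\<not> principal_ideal K (gen_ideal K {a1, b1})"
    and "b2 \<in> OK K" and "b2 \<noteq> 0"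
    and "gen_ideal K {b2} \<noteq> gen_ideal K {b1}"
  shows "((\<exists>a2\<in>OK K. a2 / b2 = a1 / b1 \<and> reduced_frac K a2 b2) \<longleftrightarrow>
           (\<exists>g2. inseverable K g2 \<and> g2 \<noteq> gen_ideal K {a1, b1} \<and>
              frac_div K b1 (gen_ideal K {a1, b1}) = frac_div K b2 g2))
       \<and> (\<forall>g2. inseverable K g2 \<and> g2 \<noteq> gen_ideal K {a1, b1} \<and>
              frac_div K b1 (gen_ideal K {a1, b1}) = frac_div K b2 g2
              \<longrightarrow> same_class K (gen_ideal K {a1, b1}) g2)"
proof -
  note nfK = assms(1) and a1 = assms(2) and b1 = assms(3) and b10 = assms(4)
    and b2 = assms(9) and b20 = assms(10) and neq = assms(11)
  interpret nf K by unfold_locales (rule nfK)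
  obtain w where w: "basis_of K w" using basis_exists by blast
  interpret nfb K w by unfold_locales (rule w)
  have g1: "gen_ideal K {a1, b1} = two a1 b1" by (rule gen_two[OF a1 b1])
  have D1: "frac_div K b1 (two a1 b1) = {t \<in> OK K. t * a1 / b1 \<in> OK K}" by (rule frac_two[OF a1 b1 b10])
  have bwd: "b2 * a1 / b1 \<in> OK K \<and> (b2 * a1 / b1) / b2 = a1 / b1 \<and> reduced_frac K (b2 * a1 / b1) b2
              \<and> g2 = two (b2 * a1 / b1) b2"
    if ins: "inseverable K g2" and eq: "frac_div K b1 (two a1 b1) = frac_div K b2 g2" for g2
  proof -
    define a2 where "a2 = b2 * a1 / b1"
    have g2i: "is_ideal K g2" "g2 \<noteq> {0}"
      and prin: "\<And>J. is_ideal K J \<Longrightarrow> principal_ideal K J \<Longrightarrow> g2 \<subseteq> J \<Longrightarrow> J = OK K"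
      using ins unfolding inseverable_def by auto
    have "b2 \<in> frac_div K b2 g2" unfolding frac_div_inv using inv_id_one[OF g2i(1)]
      by (intro image_eqI[of _ _ 1]) auto
    hence "b2 \<in> {t \<in> OK K. t * a1 / b1 \<in> OK K}" using eq D1 by simp
    hence a2OK: "a2 \<in> OK K" unfolding a2_def by simp
    have a2q: "a2 / b2 = a1 / b1" unfolding a2_def using b20 by simp
    have red: "reduced_frac K a2 b2"
      unfolding reduced_frac_def
    proof (intro conjI ballI impI)
      show "b2 \<noteq> 0" by (rule b20)
      fix d assume d: "d \<in> OK K" and dv: "OK_dvd K d a2 \<and> OK_dvd K d b2"
      then obtain c c' where c: "a2 = d * c" "c \<in> OK K" "b2 = d * c'" "c' \<in> OK K"
        unfolding OK_dvd_def by blast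
      have d0: "d \<noteq> 0" using c(3) b20 by auto
      have "c' * a1 / b1 = c"
      proof -
        have "d * (c' * a1 / b1) = b2 * a1 / b1" using c(3) by simp
        also have "\<dots> = d * c" using c(1) unfolding a2_def by simp
        finally have "d * (c' * a1 / b1) = d * c" .
        thus ?thesis using d0 by (metis mult_left_cancel)
      qed
      hence "c' \<in> {t \<in> OK K. t * a1 / b1 \<in> OK K}" using c by simp
      hence "c' \<in> frac_div K b2 g2" unfolding eq[symmetric] D1 .
      then obtain z where z: "c' = b2 * z" "z \<in> inv_id g2" unfolding frac_div_inv by blast
      have zd: "z = 1 / d" using z(1) c(3) d0 b20 by (simp add: field_simps)
      have "g2 \<subseteq> pr d"
      proof
        fix y assume y: "y \<in> g2"
        have "z * y \<in> OK K" using z(2) y unfolding inv_id_def by blast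
        moreover have "y = (z * y) * d" using zd d0 by simp
        ultimately show "y \<in> pr d" by (metis pr_memI)
      qed
      moreover have "principal_ideal K (pr d)" unfolding principal_ideal_def using gen_single[OF d] d by blast
      ultimately have "pr d = OK K" using prin pr_ideal[OF d] by blast
      hence "1 \<in> pr d" by simp
      then obtain r where "1 = r * d" "r \<in> OK K" unfolding pr_def by blast
      thus "OK_unit K d" unfolding OK_unit_def using d by (auto simp: mult.commute)
    qed
    have two2: "is_ideal K (two a2 b2)" "two a2 b2 \<noteq> {0}"
      using two_ideal[OF a2OK b2] two_mem[OF a2OK b2] b20 by auto
    have "frac_div K b2 (two a2 b2) = {t \<in> OK K. t * a2 / b2 \<in> OK K}" by (rule frac_two[OF a2OK b2 b20])
    also have "\<dots> = {t \<in> OK K. t * a1 / b1 \<in> OK K}"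
    proof -
      have "t * a2 / b2 = t * a1 / b1" for t using a2q by (metis times_divide_eq_right)
      thus ?thesis by simp
    qed
    also have "\<dots> = frac_div K b2 g2" using eq D1 by simp
    finally have "inv_id (two a2 b2) = inv_id g2" unfolding frac_div_inv by (rule image_mult_cancel[OF b20])
    hence "g2 = two a2 b2" using inv_cancel[OF two2 g2i] by simp
    thus ?thesis using a2OK a2q red unfolding a2_def by simp
  qed
  have fwd: "\<exists>g2. inseverable K g2 \<and> g2 \<noteq> two a1 b1 \<and> frac_div K b1 (two a1 b1) = frac_div K b2 g2"
    if a2: "a2 \<in> OK K" "a2 / b2 = a1 / b1" "reduced_frac K a2 b2" for a2
  proof (intro exI conjI)
    have a2e: "a2 = b2 * a1 / b1" using a2(2) b20 by (simp add: field_simps)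
    have a1e: "a1 = b1 * a2 / b2" using a2(2) b10 b20 by (simp add: field_simps)
    show "inseverable K (two a2 b2)" by (rule reduced_inseverable[OF a2(1) b2 a2(3)])
    show "frac_div K b1 (two a1 b1) = frac_div K b2 (two a2 b2)"
      unfolding D1 frac_two[OF a2(1) b2 b20] using a2e b20 by (simp add: algebra_simps)
    show "two a2 b2 \<noteq> two a1 b1"
    proof
      assume geq: "two a2 b2 = two a1 b1"
      define g where "g = two a1 b1"
      have gi: "is_ideal K g" unfolding g_def by (rule two_ideal[OF a1 b1])
      have z1: "algebraic_int (b2 / b1)"
      proof (rule stable_int[OF b1 b10 gi])
        show "b1 \<in> g" unfolding g_def using two_mem[OF a1 b1] by simp
        fix x assume "x \<in> g"
        then obtain r s where rs: "x = r * a1 + s * b1" "r \<in> OK K" "s \<in> OK K" unfolding g_def two_def by blast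
        have "b2 / b1 * x = r * a2 + s * b2" unfolding rs(1) a2e using b10 by (simp add: field_simps)
        also have "\<dots> \<in> two a2 b2" unfolding two_def using rs by blast
        finally show "b2 / b1 * x \<in> g" using geq g_def by simp
      qed
      have z2: "algebraic_int (b1 / b2)"
      proof (rule stable_int[OF b2 b20 gi])
        show "b2 \<in> g" unfolding g_def using two_mem[OF a2(1) b2] geq by simp
        fix x assume "x \<in> g"
        hence "x \<in> two a2 b2" using geq g_def by simp
        then obtain r s where rs: "x = r * a2 + s * b2" "r \<in> OK K" "s \<in> OK K" unfolding two_def by blast
        have "b1 / b2 * x = r * a1 + s * b1" unfolding rs(1) a1e using b20 by (simp add: field_simps)
        also have "\<dots> \<in> two a1 b1" unfolding two_def using rs by blast
        finally show "b1 / b2 * x \<in> g" using g_def by simp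
      qed
      have q1: "b2 / b1 \<in> OK K" using z1 b1 b2 by (intro OKI) auto
      have q2: "b1 / b2 \<in> OK K" using z2 b1 b2 by (intro OKI) auto
      have "b2 \<in> pr b1" using pr_memI[OF q1, of b1] b10 by simp
      hence s1: "pr b2 \<subseteq> pr b1" by (rule pr_least[OF pr_ideal[OF b1]])
      have "b1 \<in> pr b2" using pr_memI[OF q2, of b2] b20 by simp
      hence s2: "pr b1 \<subseteq> pr b2" by (rule pr_least[OF pr_ideal[OF b2]])
      have "gen_ideal K {b2} = gen_ideal K {b1}" using gen_single[OF b1] gen_single[OF b2] s1 s2 by simp
      thus False using neq by simp
    qed
  qed
  have cls: "same_class K (two a1 b1) g2"
    if ins: "inseverable K g2" and eq: "frac_div K b1 (two a1 b1) = frac_div K b2 g2" for g2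
  proof -
    define a2 where "a2 = b2 * a1 / b1"
    have g2e: "g2 = two a2 b2" using bwd[OF ins eq] unfolding a2_def by blast
    have h: "b2 * a1 = b1 * a2" unfolding a2_def using b10 by simp
    have key: "b2 * (r * a1 + s * b1) = b1 * (r * a2 + s * b2)" for r s
      using h by (simp add: algebra_simps)
    have "(\<lambda>x. b2 * x) ` two a1 b1 = (\<lambda>x. b1 * x) ` two a2 b2"
    proof
      show "(\<lambda>x. b2 * x) ` two a1 b1 \<subseteq> (\<lambda>x. b1 * x) ` two a2 b2"
      proof
        fix y assume "y \<in> (\<lambda>x. b2 * x) ` two a1 b1"
        then obtain r s where rs: "y = b2 * (r * a1 + s * b1)" "r \<in> OK K" "s \<in> OK K" unfolding two_def by blast
        have "r * a2 + s * b2 \<in> two a2 b2" unfolding two_def using rs by blast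
        thus "y \<in> (\<lambda>x. b1 * x) ` two a2 b2" unfolding rs(1) key by (rule imageI)
      qed
      show "(\<lambda>x. b1 * x) ` two a2 b2 \<subseteq> (\<lambda>x. b2 * x) ` two a1 b1"
      proof
        fix y assume "y \<in> (\<lambda>x. b1 * x) ` two a2 b2"
        then obtain r s where rs: "y = b1 * (r * a2 + s * b2)" "r \<in> OK K" "s \<in> OK K" unfolding two_def by blast
        have "r * a1 + s * b1 \<in> two a1 b1" unfolding two_def using rs by blast
        thus "y \<in> (\<lambda>x. b2 * x) ` two a1 b1" unfolding rs(1) key[symmetric] by (rule imageI)
      qed
    qed
    thus ?thesis unfolding same_class_def g2e using b1 b2 b10 b20 by blast
  qed
  show ?thesis unfolding g1
  proof (intro conjI iffI allI impI)
    assume "\<exists>a2\<in>OK K. a2 / b2 = a1 / b1 \<and> reduced_frac K a2 b2"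
    then obtain a2 where "a2 \<in> OK K" "a2 / b2 = a1 / b1" "reduced_frac K a2 b2" by blast
    thus "\<exists>g2. inseverable K g2 \<and> g2 \<noteq> two a1 b1 \<and> frac_div K b1 (two a1 b1) = frac_div K b2 g2"
      by (rule fwd)
  next
    assume "\<exists>g2. inseverable K g2 \<and> g2 \<noteq> two a1 b1 \<and> frac_div K b1 (two a1 b1) = frac_div K b2 g2"
    then obtain g2 where "inseverable K g2" "frac_div K b1 (two a1 b1) = frac_div K b2 g2" by blast
    from bwd[OF this] show "\<exists>a2\<in>OK K. a2 / b2 = a1 / b1 \<and> reduced_frac K a2 b2" by blast
  next
    fix g2 assume "inseverable K g2 \<and> g2 \<noteq> two a1 b1 \<and> frac_div K b1 (two a1 b1) = frac_div K b2 g2"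
    thus "same_class K (two a1 b1) g2" using cls by blast
  qed
qed


end
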